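(* Let $n$ and $\ell$ be even with $n\ge 4$. Then $\max(n,\ell)=\binom{n}{2}-\left(\frac{n}{2}+1\right)$ if and only if $\gcd(n-1,\ell)\ne 1$ and $\gcd(n-3,\ell)=1$. Moreover, in this case the only $(n,\ell)$-extremal graph is $\overline{P_4\cup\left(\frac{n}{2}-2\right)P_2}$, the complement of the unique pendant graph of order $n$ and size $\frac{n}{2}+1$.
   Context: All graphs are finite and simple; $\overline{G}$ is the complement; $kH$ is $k$ disjoint copies of $H$; $P_k$ is the path on $k$ vertices. For a graph $H$, $H\odot K_1$ is obtained from $H$ by adding for each vertex $u$ of $H$ a new vertex adjacent only to $u$; a pendant graph is a graph of this form. Vertex labels lie in $\mathbb{Z}_\ell$. In the neighborhood Lights Out game on $G$, toggling a vertex $v$ adds $1$ (mod $\ell$) to the label of each vertex of the closed neighborhood $N[v]$; the game is won when all labels are $0$. $G$ is $N$-AW if the game can be won from every initial labeling. $\max(n,\ell)$ is the maximum number of edges of an $N$-AW graph on $n$ vertices, and an $(n,\ell)$-extremal graph is an $N$-AW graph on $n$ vertices with $\max(n,\ell)$ edges. *)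

theory Defs
  imports Main
begin

definition is_graph :: "nat \<Rightarrow> nat set set \<Rightarrow> bool" where
  "is_graph n E \<longleftrightarrow> E \<subseteq> {{u, v} | u v. u < n \<and> v < n \<and> u \<noteq> v}"

definition all_pairs :: "nat \<Rightarrow> nat set set" where
  "all_pairs n = {{u, v} | u v. u < n \<and> v < n \<and> u \<noteq> v}"

definition compl_graph :: "nat \<Rightarrow> nat set set \<Rightarrow> nat set set" where
  "compl_graph n E = all_pairs n - E"

definition closed_nbhd :: "nat \<Rightarrow> nat set set \<Rightarrow> nat \<Rightarrow> nat set" where
  "closed_nbhd n E v = {u. u < n \<and> (u = v \<or> {u, v} \<in> E)}"

text \<open>Neighbourhood Lights Out over Z_l: labels are integers taken modulo l;
  a toggling vector t (t u = number of times u is toggled) wins from the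
  labelling f iff every final label f v + sum of t over N[v] is 0 mod l.\<close>
definition N_AW :: "nat \<Rightarrow> nat \<Rightarrow> nat set set \<Rightarrow> bool" where
  "N_AW n l E \<longleftrightarrow>
     (\<forall>f :: nat \<Rightarrow> int. \<exists>t :: nat \<Rightarrow> int. \<forall>v < n.
        (f v + (\<Sum>u \<in> closed_nbhd n E v. t u)) mod int l = 0)"

definition maxN :: "nat \<Rightarrow> nat \<Rightarrow> nat" where
  "maxN n l = Max {card E | E. is_graph n E \<and> N_AW n l E}"

definition extremal :: "nat \<Rightarrow> nat \<Rightarrow> nat set set \<Rightarrow> bool" where
  "extremal n l E \<longleftrightarrow> is_graph n E \<and> N_AW n l E \<and> card E = maxN n l"

definition graph_iso :: "nat \<Rightarrow> nat set set \<Rightarrow> nat set set \<Rightarrow> bool" where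
  "graph_iso n E1 E2 \<longleftrightarrow>
     (\<exists>\<pi>. bij_betw \<pi> {..<n} {..<n} \<and> E2 = (\<lambda>e. \<pi> ` e) ` E1)"

definition P4_P2s :: "nat \<Rightarrow> nat set set" where
  "P4_P2s n = {{0, 1}, {1, 2}, {2, 3}} \<union> {{2 * k, 2 * k + 1} | k. 2 \<le> k \<and> k < n div 2}"

text \<open>Corona H \<odot> K_1 of a graph H on {0..<m}: vertex i+m is the pendant
  vertex attached to i.\<close>
definition corona :: "nat \<Rightarrow> nat set set \<Rightarrow> nat set set" where
  "corona m H = H \<union> {{i, i + m} | i. i < m}"

definition pendant :: "nat \<Rightarrow> nat set set \<Rightarrow> bool" where
  "pendant n G \<longleftrightarrow> is_graph n G \<and>
     (\<exists>m H. 2 * m = n \<and> is_graph m H \<and> graph_iso n (corona m H) G)"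

end

theory Submission
  imports Defs
begin


definition nb :: "nat \<Rightarrow> nat set set \<Rightarrow> nat \<Rightarrow> nat set" where
  "nb n H v = {u. u < n \<and> {u, v} \<in> H}"

definition Mt :: "nat set \<Rightarrow> (nat \<Rightarrow> nat) \<Rightarrow> bool" where
  "Mt R p \<longleftrightarrow> (\<forall>v\<in>R. p v \<in> R \<and> p v \<noteq> v \<and> p (p v) = v)"

definition edges :: "nat set \<Rightarrow> (nat \<Rightarrow> nat) \<Rightarrow> nat set set" where
  "edges R p = {{v, p v} | v. v \<in> R}"

definition P4M :: "nat \<Rightarrow> nat set set \<Rightarrow> nat \<Rightarrow> nat \<Rightarrow> nat \<Rightarrow> nat \<Rightarrow> (nat \<Rightarrow> nat) \<Rightarrow> bool" where
  "P4M n H a b c d p \<longleftrightarrow> a < n \<and> b < n \<and> c < n \<and> d < n \<and> distinct [a,b,c,d] \<and>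
     Mt ({..<n} - {a,b,c,d}) p \<and> H = {{a,b},{b,c},{c,d}} \<union> edges ({..<n} - {a,b,c,d}) p"

lemma is_graph_edge:
  assumes "is_graph n H" "e \<in> H"
  obtains u v where "e = {u,v}" "u < n" "v < n" "u \<noteq> v"
  using assms unfolding is_graph_def by blast

lemma is_graph_sing: "is_graph n H \<Longrightarrow> {v} \<notin> H"
  unfolding is_graph_def by (auto simp: doubleton_eq_iff)

lemma nb_sub: "nb n H v \<subseteq> {..<n}" unfolding nb_def by auto

lemma finite_all_pairs: "finite (all_pairs n)"
proof -
  have "all_pairs n \<subseteq> Pow {..<n}" unfolding all_pairs_def by auto
  thus ?thesis by (rule finite_subset) auto
qed

lemma is_graph_all_pairs: "is_graph n H \<longleftrightarrow> H \<subseteq> all_pairs n"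
  unfolding is_graph_def all_pairs_def by simp

lemma finite_graph: "is_graph n H \<Longrightarrow> finite H"
  using finite_all_pairs is_graph_all_pairs by (metis finite_subset)

lemma all_pairs_eq: "all_pairs n = {B. B \<subseteq> {..<n} \<and> card B = 2}"
  unfolding all_pairs_def by (auto simp: card_2_iff)

lemma card_all_pairs: "card (all_pairs n) = n choose 2"
  using n_subsets[of "{..<n}" 2] by (simp add: all_pairs_eq)

lemma card_compl:
  assumes "is_graph n H" shows "card (compl_graph n H) = (n choose 2) - card H"
  unfolding compl_graph_def using assms
  by (simp add: card_Diff_subset finite_graph card_all_pairs is_graph_all_pairs)

lemma compl_is_graph: "is_graph n (compl_graph n H)"
  unfolding compl_graph_def is_graph_all_pairs by auto

lemma compl_compl: "is_graph n E \<Longrightarrow> compl_graph n (compl_graph n E) = E"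
  unfolding compl_graph_def is_graph_all_pairs by auto

lemma closed_compl:
  assumes "is_graph n H" "v < n"
  shows "closed_nbhd n (compl_graph n H) v = {..<n} - nb n H v"
proof -
  have "{v} \<notin> H" using is_graph_sing[OF assms(1)] .
  show ?thesis
    unfolding closed_nbhd_def nb_def compl_graph_def all_pairs_def
    using assms(2) \<open>{v} \<notin> H\<close> by auto
qed

lemma sum_closed_compl:
  assumes "is_graph n H" "v < n"
  shows "(\<Sum>u\<in>closed_nbhd n (compl_graph n H) v. (t u :: int)) = (\<Sum>u<n. t u) - (\<Sum>u\<in>nb n H v. t u)"
  using closed_compl[OF assms] nb_sub[of n H v]
  by (simp add: sum_diff)

lemma nb_sym: "u \<in> nb n H v \<Longrightarrow> v < n \<Longrightarrow> v \<in> nb n H u"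
  unfolding nb_def by (auto simp: insert_commute)



lemma closed_sub: "closed_nbhd n E v \<subseteq> {..<n}" unfolding closed_nbhd_def by auto

lemma closed_sym: "u < n \<Longrightarrow> v < n \<Longrightarrow> u \<in> closed_nbhd n E v \<longleftrightarrow> v \<in> closed_nbhd n E u"
  unfolding closed_nbhd_def by (auto simp: insert_commute)

lemma sum_restr: "A \<subseteq> {..<(n::nat)} \<Longrightarrow> (\<Sum>u\<in>A. g u) = (\<Sum>u<n. if u \<in> A then g u else (0::int))"
proof -
  assume "A \<subseteq> {..<n}"
  hence "A = {..<n} \<inter> A" by auto
  hence "(\<Sum>u\<in>A. g u) = (\<Sum>u\<in>{..<n} \<inter> A. g u)" by simp
  also have "\<dots> = (\<Sum>u<n. if u \<in> A then g u else 0)" by (rule sum.inter_restrict) simp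
  finally show ?thesis .
qed

lemma obstruction:
  assumes "N_AW n l E" "(d::int) dvd int l" "v0 < n" "\<not> d dvd y v0"
    "\<forall>u<n. d dvd (\<Sum>v\<in>closed_nbhd n E u. y v)"
  shows False
proof -
  define f :: "nat \<Rightarrow> int" where "f = (\<lambda>v. if v = v0 then 1 else 0)"
  obtain t where t: "\<forall>v<n. (f v + (\<Sum>u \<in> closed_nbhd n E v. t u)) mod int l = 0"
    using assms(1) unfolding N_AW_def by blast
  have "\<forall>v<n. d dvd (f v + (\<Sum>u \<in> closed_nbhd n E v. t u))"
    using t assms(2) by (meson dvd_trans mod_0_imp_dvd)
  hence d1: "d dvd (\<Sum>v<n. y v * (f v + (\<Sum>u \<in> closed_nbhd n E v. t u)))"
    by (intro dvd_sum) auto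
  have e1: "(\<Sum>v<n. y v * (f v + (\<Sum>u \<in> closed_nbhd n E v. t u))) =
      (\<Sum>v<n. y v * f v) + (\<Sum>v<n. (\<Sum>u \<in> closed_nbhd n E v. y v * t u))"
    by (simp add: algebra_simps sum.distrib sum_distrib_left)
  have "(\<Sum>v<n. y v * f v) = (\<Sum>v<n. if v = v0 then y v else 0)" by (rule sum.cong) (auto simp: f_def)
  hence e2: "(\<Sum>v<n. y v * f v) = y v0"
    using assms(3) by simp
  have "(\<Sum>v<n. (\<Sum>u \<in> closed_nbhd n E v. y v * t u)) =
        (\<Sum>v<n. \<Sum>u<n. if u \<in> closed_nbhd n E v then y v * t u else 0)"
    by (intro sum.cong refl sum_restr closed_sub)
  also have "\<dots> = (\<Sum>u<n. \<Sum>v<n. if u \<in> closed_nbhd n E v then y v * t u else 0)"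
    by (rule sum.swap)
  also have "\<dots> = (\<Sum>u<n. \<Sum>v<n. if v \<in> closed_nbhd n E u then y v * t u else 0)"
    by (intro sum.cong refl) (simp add: closed_sym)
  also have "\<dots> = (\<Sum>u<n. \<Sum>v\<in>closed_nbhd n E u. y v * t u)"
    by (intro sum.cong refl sum_restr[symmetric] closed_sub)
  also have "\<dots> = (\<Sum>u<n. t u * (\<Sum>v\<in>closed_nbhd n E u. y v))"
    by (simp add: sum_distrib_left mult.commute)
  finally have e3: "(\<Sum>v<n. (\<Sum>u \<in> closed_nbhd n E v. y v * t u)) = (\<Sum>u<n. t u * (\<Sum>v\<in>closed_nbhd n E u. y v))" .
  have "d dvd (\<Sum>u<n. t u * (\<Sum>v\<in>closed_nbhd n E u. y v))"
    using assms(5) by (intro dvd_sum) auto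
  with d1 e1 e2 e3 have "d dvd y v0"
    by (metis dvd_add_left_iff)
  with assms(4) show False by simp
qed



lemma card_nb_edges:
  assumes "is_graph n H" "v < n"
  shows "card (nb n H v) = card {e\<in>H. v \<in> e}"
proof -
  have "bij_betw (\<lambda>u. {u,v}) (nb n H v) {e\<in>H. v \<in> e}"
  proof (rule bij_betwI')
    fix x y assume "x \<in> nb n H v" "y \<in> nb n H v"
    show "({x, v} = {y, v}) = (x = y)" by (auto simp: doubleton_eq_iff)
  next
    fix x assume "x \<in> nb n H v" thus "{x, v} \<in> {e \<in> H. v \<in> e}" unfolding nb_def by auto
  next
    fix e assume "e \<in> {e \<in> H. v \<in> e}"
    hence e: "e \<in> H" "v \<in> e" by auto
    then obtain x y where xy: "e = {x,y}" "x < n" "y < n" "x \<noteq> y" using is_graph_edge[OF assms(1)] by metis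
    show "\<exists>x\<in>nb n H v. e = {x, v}"
    proof (cases "v = x")
      case True thus ?thesis using xy e unfolding nb_def by (intro bexI[of _ y]) (auto simp: insert_commute)
    next
      case False hence "v = y" using xy e by auto
      thus ?thesis using xy e unfolding nb_def by (intro bexI[of _ x]) auto
    qed
  qed
  thus ?thesis by (rule bij_betw_same_card)
qed

lemma handshake:
  assumes "is_graph n H"
  shows "(\<Sum>v<n. card (nb n H v)) = 2 * card H"
proof -
  have fin: "finite H" using finite_graph[OF assms] .
  have "(\<Sum>v<n. card (nb n H v)) = (\<Sum>v<n. \<Sum>e\<in>H. if v \<in> e then 1 else 0)"
  proof (intro sum.cong refl)
    fix v assume "v \<in> {..<n}"
    hence "card (nb n H v) = card {e\<in>H. v \<in> e}" using card_nb_edges[OF assms] by simp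
    also have "\<dots> = (\<Sum>e\<in>{e\<in>H. v \<in> e}. 1)" by simp
    also have "\<dots> = (\<Sum>e\<in>H. if v \<in> e then 1 else 0)" by (rule sum.inter_filter[OF fin])
    finally show "card (nb n H v) = (\<Sum>e\<in>H. if v \<in> e then 1 else 0)" .
  qed
  also have "\<dots> = (\<Sum>e\<in>H. \<Sum>v<n. if v \<in> e then 1 else 0)" by (rule sum.swap)
  also have "\<dots> = (\<Sum>e\<in>H. 2)"
  proof (intro sum.cong refl)
    fix e assume "e \<in> H"
    then obtain x y where xy: "e = {x,y}" "x < n" "y < n" "x \<noteq> y" using is_graph_edge[OF assms] by metis
    have "(\<Sum>v<n. if v \<in> e then 1 else 0) = (\<Sum>v\<in>{v\<in>{..<n}. v \<in> e}. 1::nat)"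
      by (rule sum.inter_filter[symmetric]) simp
    also have "{v\<in>{..<n}. v \<in> e} = {x,y}" using xy by auto
    finally show "(\<Sum>v<n. if v \<in> e then 1 else 0) = (2::nat)" using xy by simp
  qed
  also have "\<dots> = 2 * card H" by simp
  finally show ?thesis .
qed



locale ctx =
  fixes n l :: nat and H :: "nat set set"
  assumes G: "is_graph n H" and AW: "N_AW n l (compl_graph n H)" and evl: "even l"
begin

abbreviation "deg v \<equiv> card (nb n H v)"
definition "p v = (SOME x. x \<in> nb n H v)"

lemma nb_fin: "finite (nb n H v)" by (rule finite_subset[OF nb_sub finite_lessThan])
lemma nb_lt: "x \<in> nb n H v \<Longrightarrow> x < n" unfolding nb_def by auto
lemma no_loop: "v \<notin> nb n H v" using is_graph_sing[OF G] unfolding nb_def by auto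
lemma nbI: "{x,v} \<in> H \<Longrightarrow> x \<in> nb n H v"
  using G unfolding nb_def is_graph_def by (auto simp: doubleton_eq_iff)
lemma nbD: "x \<in> nb n H v \<Longrightarrow> {x,v} \<in> H" unfolding nb_def by auto
lemma nb_sym': "x \<in> nb n H v \<Longrightarrow> v \<in> nb n H x"
  using nbD nbI by (metis insert_commute)
lemma nb_lt2: "x \<in> nb n H v \<Longrightarrow> v < n" using nb_sym' nb_lt by blast

lemma deg1: "deg v = 1 \<Longrightarrow> nb n H v = {p v}"
proof -
  assume "deg v = 1"
  then obtain x where x: "nb n H v = {x}" by (metis One_nat_def card_1_singleton_iff)
  hence "p v = x" unfolding p_def by auto
  thus ?thesis using x by simp
qed

lemma leaf: "deg x = 1 \<Longrightarrow> u \<in> nb n H x \<Longrightarrow> nb n H x = {u}"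
  using deg1 by (metis singletonD)

lemma parity_obs:
  assumes "Y \<subseteq> {..<n}" "Y \<noteq> {}" "even (card Y)" "\<forall>u<n. even (card (nb n H u \<inter> Y))"
  shows False
proof -
  define y :: "nat \<Rightarrow> int" where "y = (\<lambda>x. if x \<in> Y then 1 else 0)"
  obtain v0 where v0: "v0 \<in> Y" using assms(2) by auto
  have finY: "finite Y" by (rule finite_subset[OF assms(1) finite_lessThan])
  have "\<forall>u<n. 2 dvd (\<Sum>x\<in>closed_nbhd n (compl_graph n H) u. y x)"
  proof (intro allI impI)
    fix u assume u: "u < n"
    let ?C = "closed_nbhd n (compl_graph n H) u"
    have C: "?C = {..<n} - nb n H u" using closed_compl[OF G u] .
    have "(\<Sum>x\<in>?C. y x) = (\<Sum>x\<in>{x\<in>?C. x \<in> Y}. 1)"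
      unfolding y_def by (rule sum.inter_filter[symmetric]) (simp add: C)
    also have "{x\<in>?C. x \<in> Y} = Y - (nb n H u \<inter> Y)" using C assms(1) by auto
    finally have s: "(\<Sum>x\<in>?C. y x) = of_nat (card (Y - (nb n H u \<inter> Y)))" by simp
    have "card (Y - (nb n H u \<inter> Y)) = card Y - card (nb n H u \<inter> Y)"
      using finY by (simp add: card_Diff_subset)
    moreover have "card (nb n H u \<inter> Y) \<le> card Y" using finY by (simp add: card_mono)
    ultimately have "even (card (Y - (nb n H u \<inter> Y)))"
      using assms(3) assms(4) u by auto
    thus "2 dvd (\<Sum>x\<in>?C. y x)" using s by (metis even_of_nat)
  qed
  moreover have "(2::int) dvd int l" using evl by simp
  moreover have "v0 < n" using v0 assms(1) by auto
  ultimately show False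
    using obstruction[OF AW, of 2 v0 y] v0 by (simp add: y_def)
qed

lemma twin_free:
  assumes "v < n" "w < n" "v \<noteq> w" "nb n H v = nb n H w" shows False
proof (rule parity_obs[of "{v,w}"])
  show "{v,w} \<subseteq> {..<n}" "{v,w} \<noteq> {}" "even (card {v,w})" using assms by auto
  show "\<forall>u<n. even (card (nb n H u \<inter> {v,w}))"
  proof (intro allI impI)
    fix u assume u: "u < n"
    have "v \<in> nb n H u \<longleftrightarrow> u \<in> nb n H v" using nb_sym' by blast
    also have "\<dots> \<longleftrightarrow> u \<in> nb n H w" using assms(4) by simp
    also have "\<dots> \<longleftrightarrow> w \<in> nb n H u" using nb_sym' by blast
    finally have "nb n H u \<inter> {v,w} = {} \<or> nb n H u \<inter> {v,w} = {v,w}" by auto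
    thus "even (card (nb n H u \<inter> {v,w}))" using assms(3) by auto
  qed
qed

definition "W = {v. v < n \<and> 2 \<le> deg v}"

lemma W_sub: "W \<subseteq> {..<n}" unfolding W_def by auto
lemma W_fin: "finite W" by (rule finite_subset[OF W_sub finite_lessThan])

lemma leaves_le1:
  assumes "u \<in> W" shows "card (nb n H u - W) \<le> 1"
proof -
  have "\<forall>x\<in>nb n H u - W. \<forall>y\<in>nb n H u - W. x = y"
  proof (intro ballI)
    fix x y assume x: "x \<in> nb n H u - W" and y: "y \<in> nb n H u - W"
    have "deg x = 1"
    proof -
      have "u \<in> nb n H x" using x nb_sym' by auto
      hence "deg x \<ge> 1" using nb_fin by (metis One_nat_def Suc_leI card_gt_0_iff empty_iff)
      moreover have "x < n" using x nb_lt by auto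
      ultimately show ?thesis using x unfolding W_def by auto
    qed
    hence nx: "nb n H x = {u}" using leaf x nb_sym' by auto
    have "deg y = 1"
    proof -
      have "u \<in> nb n H y" using y nb_sym' by auto
      hence "deg y \<ge> 1" using nb_fin by (metis One_nat_def Suc_leI card_gt_0_iff empty_iff)
      moreover have "y < n" using y nb_lt by auto
      ultimately show ?thesis using y unfolding W_def by auto
    qed
    hence ny: "nb n H y = {u}" using leaf y nb_sym' by auto
    show "x = y"
    proof (rule ccontr)
      assume "x \<noteq> y"
      thus False using twin_free[of x y] nx ny x y nb_lt by auto
    qed
  qed
  thus ?thesis using nb_fin card_le_Suc0_iff_eq[of "nb n H u - W"] by auto
qed

lemma deg_split: "deg u = card (nb n H u - W) + card (nb n H u \<inter> W)"
proof -
  have "nb n H u = (nb n H u - W) \<union> (nb n H u \<inter> W)" by auto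
  hence "deg u = card ((nb n H u - W) \<union> (nb n H u \<inter> W))" by simp
  also have "\<dots> = card (nb n H u - W) + card (nb n H u \<inter> W)"
    by (rule card_Un_disjoint) (use nb_fin in auto)
  finally show ?thesis .
qed

lemma nbW_le: "card (nb n H u \<inter> W) \<le> card W - 1" if "u \<in> W"
proof -
  have "nb n H u \<inter> W \<subseteq> W - {u}" using no_loop by auto
  hence "card (nb n H u \<inter> W) \<le> card (W - {u})" using W_fin by (intro card_mono) auto
  thus ?thesis using that W_fin by simp
qed

lemma degW_le: "u \<in> W \<Longrightarrow> deg u \<le> card W"
proof -
  assume u: "u \<in> W"
  have "card W \<ge> 1" using u W_fin by (metis One_nat_def Suc_leI card_gt_0_iff empty_iff)
  thus ?thesis using deg_split[of u] leaves_le1[OF u] nbW_le[OF u] by linarith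
qed

end


context ctx begin

definition "I = {v. v < n \<and> nb n H v = {}}"
definition "Dn = {v. v < n \<and> nb n H v \<noteq> {}}"

lemma deg1_gen: "v < n \<Longrightarrow> nb n H v \<noteq> {} \<Longrightarrow> v \<notin> W \<Longrightarrow> nb n H v = {p v}"
proof -
  assume a: "v < n" "nb n H v \<noteq> {}" "v \<notin> W"
  have "deg v \<noteq> 0" using a(2) nb_fin by simp
  moreover have "deg v < 2" using a unfolding W_def by auto
  ultimately have "deg v = 1" by linarith
  thus ?thesis by (rule deg1)
qed

lemma p_in: "nb n H v \<noteq> {} \<Longrightarrow> p v \<in> nb n H v"
  unfolding p_def by (meson all_not_in_conv someI)

lemma I_le1: "card I \<le> 1"
proof -
  have "finite I" unfolding I_def by auto
  moreover have "\<forall>x\<in>I. \<forall>y\<in>I. x = y"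
    using twin_free unfolding I_def by fastforce
  ultimately show ?thesis using card_le_Suc0_iff_eq by auto
qed

lemma DI: "card Dn + card I = n"
proof -
  have "{..<n} = Dn \<union> I" unfolding Dn_def I_def by auto
  moreover have "Dn \<inter> I = {}" unfolding Dn_def I_def by auto
  moreover have "finite Dn" "finite I" unfolding Dn_def I_def by auto
  ultimately show ?thesis by (metis card_Un_disjoint card_lessThan)
qed

lemma W_D: "W \<subseteq> Dn" unfolding W_def Dn_def by auto

lemma sum_deg: "2 * card H = card Dn + (\<Sum>v\<in>W. deg v - 1)"
proof -
  have fD: "finite Dn" unfolding Dn_def by auto
  have "2 * card H = (\<Sum>v<n. deg v)" using handshake[OF G] by simp
  also have "\<dots> = (\<Sum>v\<in>Dn. deg v)"
    by (rule sum.mono_neutral_right) (auto simp: Dn_def)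
  also have "\<dots> = (\<Sum>v\<in>Dn. (deg v - 1) + 1)"
  proof (rule sum.cong[OF refl])
    fix v assume "v \<in> Dn" hence "deg v \<noteq> 0" using nb_fin unfolding Dn_def by auto
    thus "deg v = deg v - 1 + 1" by simp
  qed
  also have "\<dots> = (\<Sum>v\<in>Dn. deg v - 1) + (\<Sum>v\<in>Dn. 1)" by (rule sum.distrib)
  also have "\<dots> = (\<Sum>v\<in>Dn. deg v - 1) + card Dn" by simp
  also have "(\<Sum>v\<in>Dn. deg v - 1) = (\<Sum>v\<in>W. deg v - 1)"
  proof (rule sum.mono_neutral_right[OF fD W_D], rule ballI)
    fix v assume "v \<in> Dn - W"
    hence "nb n H v = {p v}" using deg1_gen unfolding Dn_def by auto
    thus "deg v - 1 = 0" by simp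
  qed
  finally show ?thesis by simp
qed

lemma W_lower: "card W \<le> (\<Sum>v\<in>W. deg v - 1)"
proof -
  have "(\<Sum>v\<in>W. 1) \<le> (\<Sum>v\<in>W. deg v - 1)"
    by (rule sum_mono) (auto simp: W_def)
  thus ?thesis by simp
qed

lemma W_upper: "(\<Sum>v\<in>W. deg v - 1) \<le> card W * (card W - 1)"
proof -
  have "(\<Sum>v\<in>W. deg v - 1) \<le> (\<Sum>v\<in>W. card W - 1)"
    by (rule sum_mono) (use degW_le in \<open>simp add: diff_le_mono\<close>)
  thus ?thesis by simp
qed

lemma W_term_ge: "v \<in> W \<Longrightarrow> deg v - 1 \<ge> 1" unfolding W_def by auto

end


context ctx begin

lemma edge_nb: "e \<in> H \<Longrightarrow> \<exists>x y. e = {x,y} \<and> x < n \<and> y \<in> nb n H x"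
proof -
  assume e: "e \<in> H"
  then obtain u v where uv: "e = {u,v}" "u < n" "v < n" "u \<noteq> v" using is_graph_edge[OF G] by metis
  hence "u \<in> nb n H v" using nbI e by simp
  thus ?thesis using uv by (intro exI[of _ v] exI[of _ u]) (auto simp: insert_commute)
qed

lemma nb_one: "v < n \<Longrightarrow> v \<notin> I \<Longrightarrow> v \<notin> W \<Longrightarrow> nb n H v = {p v}"
  using deg1_gen unfolding I_def by auto

lemma S0:
  assumes "W = {}" "I = {}"
  shows "Mt {..<n} p \<and> H = edges {..<n} p"
proof -
  have one: "\<And>v. v < n \<Longrightarrow> nb n H v = {p v}" using nb_one assms by auto
  have Mt: "Mt {..<n} p"
    unfolding Mt_def
  proof (intro ballI conjI)
    fix v assume v: "v \<in> {..<n}"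
    have pv: "p v \<in> nb n H v" using one v by auto
    thus "p v \<in> {..<n}" using nb_lt by auto
    show "p v \<noteq> v" using pv no_loop by auto
    have "v \<in> nb n H (p v)" using pv nb_sym' by auto
    moreover have "nb n H (p v) = {p (p v)}" using one pv nb_lt by auto
    ultimately show "p (p v) = v" by auto
  qed
  have "H = edges {..<n} p"
  proof
    show "H \<subseteq> edges {..<n} p"
    proof
      fix e assume "e \<in> H"
      then obtain x y where xy: "e = {x,y}" "x < n" "y \<in> nb n H x" using edge_nb by blast
      hence "y = p x" using one by auto
      thus "e \<in> edges {..<n} p" unfolding edges_def using xy by auto
    qed
  next
    show "edges {..<n} p \<subseteq> H"
    proof
      fix e assume "e \<in> edges {..<n} p"
      then obtain v where v: "v < n" "e = {v, p v}" unfolding edges_def by auto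
      hence "p v \<in> nb n H v" using one by auto
      hence "{p v, v} \<in> H" by (rule nbD)
      thus "e \<in> H" using v by (simp add: insert_commute)
    qed
  qed
  with Mt show ?thesis by simp
qed

lemma W_nb_struct:
  assumes "u \<in> W" "deg u = 2" "nb n H u \<inter> W \<subseteq> {w}" "w \<in> nb n H u"
  shows "\<exists>a. nb n H u = {a, w} \<and> a \<notin> W \<and> a \<noteq> w \<and> nb n H a = {u} \<and> a < n"
proof -
  have "card (nb n H u \<inter> W) \<ge> 1" using deg_split[of u] leaves_le1[OF assms(1)] assms(2) by linarith
  hence "nb n H u \<inter> W \<noteq> {}" by auto
  hence wW: "nb n H u \<inter> W = {w}" using assms(3) by auto
  have "card (nb n H u - W) = 1" using deg_split[of u] wW assms(2) by simp
  then obtain a where a: "nb n H u - W = {a}" by (metis One_nat_def card_1_singleton_iff)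
  have nbu: "nb n H u = {a, w}" using a wW by blast
  have aW: "a \<notin> W" using a by auto
  have an: "a < n" using a nb_lt by blast
  have "u \<in> nb n H a" using a nb_sym' by blast
  hence "nb n H a \<noteq> {}" by auto
  hence "nb n H a = {p a}" using deg1_gen an aW by auto
  hence "nb n H a = {u}" using \<open>u \<in> nb n H a\<close> by auto
  moreover have "a \<noteq> w" using aW wW by auto
  ultimately show ?thesis using nbu aW an by blast
qed

end


context ctx begin

lemma in_nbW:
  assumes "u \<in> W" "deg u = 2" "nb n H u \<inter> W \<subseteq> {w}"
  shows "w \<in> nb n H u"
proof -
  have "card (nb n H u \<inter> W) \<ge> 1" using deg_split[of u] leaves_le1[OF assms(1)] assms(2) by linarith
  hence "nb n H u \<inter> W \<noteq> {}" by auto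
  thus ?thesis using assms(3) by auto
qed

lemma S2:
  assumes "I = {}" "W = {u,w}" "u \<noteq> w" "deg u = 2" "deg w = 2"
  shows "\<exists>a d. P4M n H a u w d p"
proof -
  have uW: "u \<in> W" and wW: "w \<in> W" using assms by auto
  have un: "u < n" and wn: "w < n" using uW wW W_def by auto
  have s1: "nb n H u \<inter> W \<subseteq> {w}" using assms(2) no_loop by auto
  have s2: "nb n H w \<inter> W \<subseteq> {u}" using assms(2) no_loop by auto
  obtain a where a: "nb n H u = {a, w}" "a \<notin> W" "a \<noteq> w" "nb n H a = {u}" "a < n"
    using W_nb_struct[OF uW assms(4) s1 in_nbW[OF uW assms(4) s1]] by blast
  obtain d where d: "nb n H w = {d, u}" "d \<notin> W" "d \<noteq> u" "nb n H d = {w}" "d < n"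
    using W_nb_struct[OF wW assms(5) s2 in_nbW[OF wW assms(5) s2]] by blast
  have ad: "a \<noteq> d" using a(4) d(4) assms(3) by auto
  have au: "a \<noteq> u" using a(2) uW by auto
  have dw: "d \<noteq> w" using d(2) wW by auto
  define R where "R = {..<n} - {a,u,w,d}"
  have one: "\<And>v. v \<in> R \<Longrightarrow> nb n H v = {p v}"
    using nb_one assms(1,2) unfolding R_def by auto
  have pR: "\<And>v. v \<in> R \<Longrightarrow> p v \<in> R"
  proof -
    fix v assume v: "v \<in> R"
    have pv: "p v \<in> nb n H v" using one v by auto
    have vp: "v \<in> nb n H (p v)" using pv nb_sym' by auto
    have "p v \<noteq> a" using vp a(4) v R_def by auto
    moreover have "p v \<noteq> d" using vp d(4) v R_def by auto
    moreover have "p v \<noteq> u" using vp a(1) v R_def by auto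
    moreover have "p v \<noteq> w" using vp d(1) v R_def by auto
    moreover have "p v < n" using pv nb_lt by auto
    ultimately show "p v \<in> R" unfolding R_def by auto
  qed
  have Mt: "Mt R p"
    unfolding Mt_def
  proof (intro ballI conjI)
    fix v assume v: "v \<in> R"
    show "p v \<in> R" using pR v .
    have pv: "p v \<in> nb n H v" using one v by auto
    show "p v \<noteq> v" using pv no_loop by auto
    have "v \<in> nb n H (p v)" using pv nb_sym' by auto
    moreover have "nb n H (p v) = {p (p v)}" using one pR v by auto
    ultimately show "p (p v) = v" by auto
  qed
  have Heq: "H = {{a,u},{u,w},{w,d}} \<union> edges R p"
  proof
    show "H \<subseteq> {{a,u},{u,w},{w,d}} \<union> edges R p"
    proof
      fix e assume "e \<in> H"
      then obtain x y where xy: "e = {x,y}" "x < n" "y \<in> nb n H x" using edge_nb by blast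
      show "e \<in> {{a,u},{u,w},{w,d}} \<union> edges R p"
      proof (cases "x \<in> R")
        case True
        hence "y = p x" using one xy by auto
        thus ?thesis unfolding edges_def using xy True by auto
      next
        case False
        hence "x = a \<or> x = u \<or> x = w \<or> x = d" using xy R_def by auto
        thus ?thesis using xy a d by (auto simp: insert_commute)
      qed
    qed
  next
    show "{{a,u},{u,w},{w,d}} \<union> edges R p \<subseteq> H"
    proof
      fix e assume e: "e \<in> {{a,u},{u,w},{w,d}} \<union> edges R p"
      show "e \<in> H"
      proof (cases "e \<in> edges R p")
        case True
        then obtain v where v: "v \<in> R" "e = {v, p v}" unfolding edges_def by auto
        hence "p v \<in> nb n H v" using one by auto
        hence "{p v, v} \<in> H" by (rule nbD)
        thus "e \<in> H" using v by (simp add: insert_commute)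
      next
        case False
        hence "e = {a,u} \<or> e = {u,w} \<or> e = {w,d}" using e by auto
        moreover have "{a,u} \<in> H" using nbD[of a u] a(1) by auto
        moreover have "{w,u} \<in> H" using nbD[of w u] a(1) by auto
        moreover have "{d,w} \<in> H" using nbD[of d w] d(1) by auto
        ultimately show "e \<in> H" by (auto simp: insert_commute)
      qed
    qed
  qed
  have "P4M n H a u w d p"
    unfolding P4M_def using a(5) un wn d(5) ad au dw a(3) d(3) assms(3) Mt Heq R_def by auto
  thus ?thesis by blast
qed

end


context ctx begin

lemma iso_facts:
  assumes "I = {z}"
  shows "z < n" "nb n H z = {}" "\<And>v. v < n \<Longrightarrow> v \<noteq> z \<Longrightarrow> v \<notin> W \<Longrightarrow> nb n H v = {p v}"
  using assms nb_one unfolding I_def by auto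

lemma nb2_eq: "deg x = 2 \<Longrightarrow> y \<in> nb n H x \<Longrightarrow> w \<in> nb n H x \<Longrightarrow> y \<noteq> w \<Longrightarrow> nb n H x = {y,w}"
  by (metis card_subset_eq empty_subsetI insert_subset nb_fin card_2_iff)

lemma T3:
  assumes "I = {z}" "W = {x,y,w}" "x \<noteq> y" "y \<noteq> w" "x \<noteq> w"
    "deg x = 2" "deg y = 2" "deg w = 2"
    "y \<in> nb n H x" "w \<in> nb n H x" "w \<in> nb n H y"
  shows False
proof -
  note iz = iso_facts[OF assms(1)]
  have xn: "x < n" "y < n" "w < n" using assms(2) W_def by auto
  have zW: "z \<notin> W" using iz(2) W_def by auto
  have nx: "nb n H x = {y,w}" using nb2_eq assms by auto
  have ny: "nb n H y = {x,w}" using nb2_eq assms nb_sym' by auto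
  have nw: "nb n H w = {x,y}" using nb2_eq assms nb_sym' by auto
  show False
  proof (rule parity_obs[of "{z,x,y,w}"])
    show "{z,x,y,w} \<subseteq> {..<n}" using xn iz by auto
    show "{z,x,y,w} \<noteq> {}" by auto
    show "even (card {z,x,y,w})" using assms zW by auto
    show "\<forall>u<n. even (card (nb n H u \<inter> {z,x,y,w}))"
    proof (intro allI impI)
      fix u assume u: "u < n"
      consider "u = z" | "u = x" | "u = y" | "u = w" | "u \<noteq> z \<and> u \<notin> W" using assms(2) by auto
      thus "even (card (nb n H u \<inter> {z,x,y,w}))"
      proof cases
        case 1 thus ?thesis using iz by simp
      next
        case 2
        hence "nb n H u \<inter> {z,x,y,w} = {y,w}" using nx zW assms by auto
        thus ?thesis using assms by simp
      next
        case 3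
        hence "nb n H u \<inter> {z,x,y,w} = {x,w}" using ny zW assms by auto
        thus ?thesis using assms by simp
      next
        case 4
        hence "nb n H u \<inter> {z,x,y,w} = {x,y}" using nw zW assms by auto
        thus ?thesis using assms by simp
      next
        case 5
        hence nu: "nb n H u = {p u}" using iz u by auto
        have "u \<in> nb n H (p u)" using nu nb_sym' by auto
        hence "p u \<notin> {z,x,y,w}" using iz nx ny nw 5 assms(2) by auto
        hence "nb n H u \<inter> {z,x,y,w} = {}" using nu by auto
        thus ?thesis by simp
      qed
    qed
  qed
qed

lemma P5:
  assumes "I = {z}" "W = {x,y,w}" "x \<noteq> y" "y \<noteq> w" "x \<noteq> w"
    "deg x = 2" "deg y = 2" "deg w = 2" "w \<notin> nb n H x"
  shows False
proof -
  note iz = iso_facts[OF assms(1)]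
  have xn: "x < n" "y < n" "w < n" using assms(2) W_def by auto
  have zW: "z \<notin> W" using iz(2) W_def by auto
  have xW: "x \<in> W" and yW: "y \<in> W" and wW: "w \<in> W" using assms(2) by auto
  have s1: "nb n H x \<inter> W \<subseteq> {y}" using assms(2,9) no_loop by auto
  have xw': "x \<notin> nb n H w" using assms(9) nb_sym' by auto
  have s2: "nb n H w \<inter> W \<subseteq> {y}" using assms(2) xw' no_loop by auto
  obtain a where a: "nb n H x = {a, y}" "a \<notin> W" "a \<noteq> y" "nb n H a = {x}" "a < n"
    using W_nb_struct[OF xW assms(6) s1 in_nbW[OF xW assms(6) s1]] by blast
  obtain e where e: "nb n H w = {e, y}" "e \<notin> W" "e \<noteq> y" "nb n H e = {w}" "e < n"
    using W_nb_struct[OF wW assms(8) s2 in_nbW[OF wW assms(8) s2]] by blast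
  have ny: "nb n H y = {x,w}" using nb2_eq[of y x w] assms a(1) e(1) nb_sym' by auto
  have ae: "a \<noteq> e" using a(4) e(4) assms(5) by auto
  have az: "a \<noteq> z" "e \<noteq> z" using a(4) e(4) iz(2) by auto
  have aW: "a \<noteq> x" "a \<noteq> w" "e \<noteq> x" "e \<noteq> w" using a(2) e(2) assms(2) by auto
  have yz: "y \<noteq> z" using yW zW by auto
  show False
  proof (rule parity_obs[of "{z,a,y,e}"])
    show "{z,a,y,e} \<subseteq> {..<n}" using xn iz a e by auto
    show "{z,a,y,e} \<noteq> {}" by auto
    show "even (card {z,a,y,e})" using az ae a(3) e(3) yz by auto
    show "\<forall>u<n. even (card (nb n H u \<inter> {z,a,y,e}))"
    proof (intro allI impI)
      fix u assume u: "u < n"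
      consider "u = z" | "u = a" | "u = x" | "u = y" | "u = w" | "u = e"
        | "u \<noteq> z \<and> u \<notin> W \<and> u \<noteq> a \<and> u \<noteq> e" using assms(2) by auto
      thus "even (card (nb n H u \<inter> {z,a,y,e}))"
      proof cases
        case 1 thus ?thesis using iz by simp
      next
        case 2
        hence "nb n H u \<inter> {z,a,y,e} = {}" using a(4) aW assms(3) xW zW by auto
        thus ?thesis by simp
      next
        case 3
        hence "nb n H u \<inter> {z,a,y,e} = {a,y}" using a(1) by auto
        thus ?thesis using a(3) by simp
      next
        case 4
        hence "nb n H u \<inter> {z,a,y,e} = {}" using ny aW assms zW xW wW by auto
        thus ?thesis by simp
      next
        case 5
        hence "nb n H u \<inter> {z,a,y,e} = {e,y}" using e(1) by auto
        thus ?thesis using e(3) by simp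
      next
        case 6
        hence "nb n H u \<inter> {z,a,y,e} = {}" using e(4) aW assms(4) wW zW by auto
        thus ?thesis by simp
      next
        case 7
        hence nu: "nb n H u = {p u}" using iz u by auto
        have "u \<in> nb n H (p u)" using nu nb_sym' by auto
        hence "p u \<notin> {z,a,y,e}" using iz a(4) e(4) ny 7 assms(2) by auto
        hence "nb n H u \<inter> {z,a,y,e} = {}" using nu by auto
        thus ?thesis by simp
      qed
    qed
  qed
qed

lemma S3:
  assumes "I = {z}" "W = {x,y,w}" "x \<noteq> y" "y \<noteq> w" "x \<noteq> w"
    "deg x = 2" "deg y = 2" "deg w = 2"
  shows False
proof (cases "w \<in> nb n H x")
  case False thus False using P5[OF assms] by blast
next
  case wx: True
  show False
  proof (cases "y \<in> nb n H x")
    case False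
    have "W = {x,w,y}" using assms(2) by auto
    thus False using P5[of z x w y] assms False by auto
  next
    case yx: True
    show False
    proof (cases "w \<in> nb n H y")
      case True thus False using T3[OF assms yx wx] by blast
    next
      case False
      have "W = {y,x,w}" using assms(2) by auto
      thus False using P5[of z y x w] assms False by auto
    qed
  qed
qed

end


context ctx begin

lemma classify:
  assumes "even n" "card H \<le> n div 2 + 1"
  shows "(Mt {..<n} p \<and> H = edges {..<n} p) \<or> (\<exists>a b c d. P4M n H a b c d p)"
proof -
  define r where "r = (\<Sum>v\<in>W. deg v - 1)"
  have e1: "2 * card H = card Dn + r" using sum_deg r_def by simp
  have e2: "card Dn + card I = n" by (rule DI)
  have e3: "card I \<le> 1" by (rule I_le1)
  have e4: "card W \<le> r" using W_lower r_def by simp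
  have e5: "r \<le> card W * (card W - 1)" using W_upper r_def by simp
  have fI: "finite I" unfolding I_def by auto
  have wle: "\<And>v. v \<in> W \<Longrightarrow> deg v \<le> card W" by (rule degW_le)
  have wge: "\<And>v. v \<in> W \<Longrightarrow> deg v \<ge> 2" unfolding W_def by auto
  have "r \<le> 3" using e1 e2 e3 assms by linarith
  hence cW: "card W \<le> 3" using e4 by simp
  have cW01: "card W \<le> 1 \<Longrightarrow> r = 0" using e5 by (cases "card W") auto
  show ?thesis
  proof (cases "card I = 0")
    case True
    hence I0: "I = {}" using fI by simp
    have "r \<le> 2" using e1 e2 True assms by linarith
    moreover have "even r" using e1 e2 True assms(1) by (metis add_0_right dvd_add_right_iff dvd_triv_left)
    ultimately have "r = 0 \<or> r = 2" by (metis One_nat_def dvd_refl even_Suc le_Suc_eq le_zero_eq numeral_2_eq_2 odd_one)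
    thus ?thesis
    proof
      assume "r = 0"
      hence "W = {}" using e4 W_fin by simp
      thus ?thesis using S0 I0 by blast
    next
      assume r2: "r = 2"
      have "\<not> card W \<le> 1" using cW01 r2 by auto
      moreover have "card W \<le> 2" using e4 r2 by simp
      ultimately have "card W = 2" by linarith
      then obtain u w where uw: "W = {u,w}" "u \<noteq> w" by (meson card_2_iff)
      have "(deg u - 1) + (deg w - 1) = 2" using r2 uw r_def by simp
      moreover have "deg u \<ge> 2" "deg w \<ge> 2" using wge uw by auto
      ultimately have "deg u = 2" "deg w = 2" by linarith+
      thus ?thesis using S2[OF I0 uw] by blast
    qed
  next
    case False
    hence I1: "card I = 1" using e3 by simp
    then obtain z where z: "I = {z}" by (metis One_nat_def card_1_singleton_iff)
    have "r \<le> 3" using e1 e2 I1 assms by linarith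
    have "odd r"
    proof -
      have "2 * card H = (n - 1) + r" using e1 e2 I1 by simp
      moreover have "n \<ge> 1" using e2 I1 by simp
      ultimately show ?thesis using assms(1)
        by presburger
    qed
    hence "r \<noteq> 0" by (metis dvd_0_right)
    hence "card W \<ge> 2" using cW01 by linarith
    show ?thesis
    proof (cases "card W = 2")
      case True
      then obtain u w where uw: "W = {u,w}" "u \<noteq> w" by (meson card_2_iff)
      have "r = (deg u - 1) + (deg w - 1)" using uw r_def by simp
      moreover have "deg u \<le> card W" "deg w \<le> card W" using wle uw by auto
      ultimately have "r \<le> 2" using True by linarith
      hence "r = 2" using e4 True by linarith
      hence False using \<open>odd r\<close> by simp
      thus ?thesis ..
    next
      case False
      hence "card W = 3" using cW \<open>card W \<ge> 2\<close> by linarith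
      then obtain x y w where xyw: "W = {x,y,w}" "x \<noteq> y" "y \<noteq> w" "x \<noteq> w" by (meson card_3_iff)
      have "r = (deg x - 1) + (deg y - 1) + (deg w - 1)" using xyw r_def by simp
      moreover have "deg x \<ge> 2" "deg y \<ge> 2" "deg w \<ge> 2" using wge xyw by auto
      moreover have "r \<le> 3" by fact
      ultimately have "deg x = 2" "deg y = 2" "deg w = 2" by linarith+
      hence False using S3[OF z xyw] by blast
      thus ?thesis ..
    qed
  qed
qed

end


lemma inv_mod:
  assumes "gcd k l = (1::nat)"
  shows "\<exists>s q. int k * s = 1 + int l * q"
proof -
  have "gcd (int k) (int l) = 1" using assms by (metis of_nat_1 gcd_int_int_eq)
  then obtain u v where "u * int k + v * int l = 1" using bezout_int by metis
  thus ?thesis by (intro exI[of _ u] exI[of _ "-v"]) (simp add: algebra_simps)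
qed

lemma edges_mem: "Mt R p \<Longrightarrow> {u, v} \<in> edges R p \<longleftrightarrow> (v \<in> R \<and> u = p v)"
  unfolding edges_def Mt_def by (auto simp: doubleton_eq_iff)

lemma edges_graph: "Mt R p \<Longrightarrow> R \<subseteq> {..<n} \<Longrightarrow> is_graph n (edges R p)"
  unfolding is_graph_def edges_def Mt_def by fastforce

lemma PM_nb: "Mt {..<n} p \<Longrightarrow> H = edges {..<n} p \<Longrightarrow> v < n \<Longrightarrow> nb n H v = {p v}"
  unfolding nb_def using edges_mem[of "{..<n}" p] by (auto simp: Mt_def)

lemma PM_NAW:
  assumes M: "Mt {..<n} p" and HE: "H = edges {..<n} p" and l: "l \<ge> 1" and n: "n \<ge> 1"
  shows "N_AW n l (compl_graph n H) \<longleftrightarrow> gcd (n - 1) l = 1"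
proof -
  have G: "is_graph n H" using edges_graph[OF M] HE by auto
  have sc: "\<And>v t. v < n \<Longrightarrow> (\<Sum>u\<in>closed_nbhd n (compl_graph n H) v. (t u :: int)) = (\<Sum>u<n. t u) - t (p v)"
    using sum_closed_compl[OF G] PM_nb[OF M HE] by simp
  show ?thesis
  proof
    assume AW: "N_AW n l (compl_graph n H)"
    show "gcd (n - 1) l = 1"
    proof (rule ccontr)
      assume g: "gcd (n - 1) l \<noteq> 1"
      define g where "g = gcd (n - 1) l"
      have gpos: "g \<noteq> 0" using l g_def by simp
      have "int g dvd int l" unfolding g_def by simp
      moreover have "\<not> int g dvd (\<lambda>x. 1::int) 0" using g gpos g_def by simp
      moreover have "\<forall>u<n. int g dvd (\<Sum>v\<in>closed_nbhd n (compl_graph n H) u. (\<lambda>x. 1::int) v)"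
      proof (intro allI impI)
        fix u assume u: "u < n"
        have "(\<Sum>v\<in>closed_nbhd n (compl_graph n H) u. (\<lambda>x. 1::int) v) = int n - 1"
          using sc[OF u, of "\<lambda>x. 1"] by simp
        also have "\<dots> = int (n - 1)" using n by simp
        finally show "int g dvd (\<Sum>v\<in>closed_nbhd n (compl_graph n H) u. (\<lambda>x. 1::int) v)"
          unfolding g_def by simp
      qed
      ultimately show False using obstruction[OF AW, of "int g" 0 "\<lambda>x. 1"] n by auto
    qed
  next
    assume "gcd (n - 1) l = 1"
    from inv_mod[OF this] obtain s q where sq: "int (n - 1) * s = 1 + int l * q" by blast
    show "N_AW n l (compl_graph n H)"
      unfolding N_AW_def
    proof
      fix f :: "nat \<Rightarrow> int"
      define C where "C = (\<Sum>u<n. f (p u))"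
      define \<sigma> where "\<sigma> = - C * s"
      define t where "t = (\<lambda>u. f (p u) + \<sigma>)"
      have St: "(\<Sum>u<n. t u) = C + int n * \<sigma>" unfolding t_def C_def by (simp add: sum.distrib)
      have "\<forall>v<n. (f v + (\<Sum>u\<in>closed_nbhd n (compl_graph n H) v. t u)) mod int l = 0"
      proof (intro allI impI)
        fix v assume v: "v < n"
        have ppv: "p (p v) = v" using M v unfolding Mt_def by auto
        have "f v + (\<Sum>u\<in>closed_nbhd n (compl_graph n H) v. t u) = C + (int n - 1) * \<sigma>"
          using sc[OF v, of t] St ppv unfolding t_def by (simp add: algebra_simps)
        also have "\<dots> = C - C * (int (n - 1) * s)" unfolding \<sigma>_def using n by (simp add: algebra_simps of_nat_diff)
        also have "\<dots> = int l * (- C * q)" using sq by (simp add: algebra_simps)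
        finally show "(f v + (\<Sum>u\<in>closed_nbhd n (compl_graph n H) v. t u)) mod int l = 0" by simp
      qed
      thus "\<exists>t. \<forall>v<n. (f v + (\<Sum>u\<in>closed_nbhd n (compl_graph n H) v. t u)) mod int l = 0" by blast
    qed
  qed
qed



lemma P4M_graph: "P4M n H a b c d p \<Longrightarrow> is_graph n H"
  unfolding P4M_def
proof (elim conjE)
  assume as: "a < n" "b < n" "c < n" "d < n" "distinct [a,b,c,d]"
    "Mt ({..<n} - {a,b,c,d}) p" "H = {{a,b},{b,c},{c,d}} \<union> edges ({..<n} - {a,b,c,d}) p"
  have "is_graph n (edges ({..<n} - {a,b,c,d}) p)" using edges_graph[OF as(6)] by auto
  moreover have "{{a,b},{b,c},{c,d}} \<subseteq> {{u, v} | u v. u < n \<and> v < n \<and> u \<noteq> v}" using as(1-5) by auto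
  ultimately show "is_graph n H" using as(7) unfolding is_graph_def by auto
qed

lemma P4M_nb:
  assumes "P4M n H a b c d p"
  shows "nb n H a = {b}" "nb n H b = {a,c}" "nb n H c = {b,d}" "nb n H d = {c}"
    "\<And>v. v \<in> {..<n} - {a,b,c,d} \<Longrightarrow> nb n H v = {p v}"
proof -
  let ?R = "{..<n} - {a,b,c,d}"
  have as: "a < n" "b < n" "c < n" "d < n" "distinct [a,b,c,d]"
    "Mt ?R p" "H = {{a,b},{b,c},{c,d}} \<union> edges ?R p" using assms unfolding P4M_def by auto
  have mem: "\<And>u v. {u,v} \<in> H \<longleftrightarrow> {u,v} \<in> {{a,b},{b,c},{c,d}} \<or> (v \<in> ?R \<and> u = p v)"
    using as(7) edges_mem[OF as(6)] by auto
  have pR: "\<And>v. v \<in> ?R \<Longrightarrow> p v \<in> ?R" using as(6) unfolding Mt_def by blast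
  show "nb n H a = {b}" unfolding nb_def mem using as(1-5) by (auto simp: doubleton_eq_iff)
  show "nb n H b = {a,c}" unfolding nb_def mem using as(1-5) by (auto simp: doubleton_eq_iff)
  show "nb n H c = {b,d}" unfolding nb_def mem using as(1-5) by (auto simp: doubleton_eq_iff)
  show "nb n H d = {c}" unfolding nb_def mem using as(1-5) by (auto simp: doubleton_eq_iff)
  fix v assume v: "v \<in> ?R"
  have "p v \<in> ?R" using pR v .
  thus "nb n H v = {p v}" unfolding nb_def mem using v by (auto simp: doubleton_eq_iff)
qed

lemma sum_split4:
  fixes n :: nat
  assumes "a < n" "b < n" "c < n" "d < n" "distinct [a,b,c,d]"
  shows "(\<Sum>u<n. (t u::int)) = t a + t b + t c + t d + (\<Sum>u\<in>{..<n} - {a,b,c,d}. t u)"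
proof -
  have "(\<Sum>u<n. t u) = (\<Sum>u\<in>{a,b,c,d}. t u) + (\<Sum>u\<in>{..<n} - {a,b,c,d}. t u)"
    using assms by (subst sum.subset_diff[of "{a,b,c,d}" "{..<n}"]) auto
  thus ?thesis using assms by simp
qed

lemma card_R4:
  fixes n :: nat
  assumes "a < n" "b < n" "c < n" "d < n" "distinct [a,b,c,d]"
  shows "card ({..<n} - {a,b,c,d}) = n - 4"
  using assms by (subst card_Diff_subset) auto

lemma P4M_NAW:
  assumes P: "P4M n H a b c d p" and l: "l \<ge> 1"
  shows "N_AW n l (compl_graph n H) \<longleftrightarrow> gcd (n - 3) l = 1"
proof -
  let ?R = "{..<n} - {a,b,c,d}"
  have as: "a < n" "b < n" "c < n" "d < n" "distinct [a,b,c,d]"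
    "Mt ?R p" using P unfolding P4M_def by auto
  have G: "is_graph n H" using P4M_graph[OF P] .
  note nbs = P4M_nb[OF P]
  have cR: "card ?R = n - 4" using card_R4[OF as(1-5)] .
  have n4: "n \<ge> 4"
  proof -
    have "{a,b,c,d} \<subseteq> {..<n}" using as by auto
    hence "card {a,b,c,d} \<le> n" by (metis card_lessThan card_mono finite_lessThan)
    thus ?thesis using as(5) by simp
  qed
  have sc: "\<And>v t. v < n \<Longrightarrow> (\<Sum>u\<in>closed_nbhd n (compl_graph n H) v. (t u :: int)) = (\<Sum>u<n. t u) - (\<Sum>u\<in>nb n H v. t u)"
    using sum_closed_compl[OF G] by simp
  have split: "\<And>t. (\<Sum>u<n. (t u::int)) = t a + t b + t c + t d + (\<Sum>u\<in>?R. t u)"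
    using sum_split4[OF as(1-5)] by blast
  have pR: "\<And>v. v \<in> ?R \<Longrightarrow> p v \<in> ?R \<and> p (p v) = v" using as(6) unfolding Mt_def by blast
  show ?thesis
  proof
    assume AW: "N_AW n l (compl_graph n H)"
    show "gcd (n - 3) l = 1"
    proof (rule ccontr)
      assume g: "gcd (n - 3) l \<noteq> 1"
      define g where "g = gcd (n - 3) l"
      define y :: "nat \<Rightarrow> int" where "y = (\<lambda>x. if x = a \<or> x = d then 0 else 1)"
      have gpos: "g \<noteq> 0" using l g_def by simp
      have "int g dvd int l" unfolding g_def by simp
      moreover have "\<not> int g dvd y b" using g gpos g_def as(5) by (simp add: y_def)
      moreover have "\<forall>u<n. int g dvd (\<Sum>v\<in>closed_nbhd n (compl_graph n H) u. y v)"
      proof (intro allI impI)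
        fix u assume u: "u < n"
        have Sy: "(\<Sum>v<n. y v) = int n - 2"
        proof -
          have "(\<Sum>v\<in>?R. y v) = (\<Sum>v\<in>?R. 1)" by (rule sum.cong) (auto simp: y_def)
          hence "(\<Sum>v\<in>?R. y v) = int n - 4" using cR n4 by simp
          thus ?thesis using split[of y] as(5) by (simp add: y_def)
        qed
        have Ny: "(\<Sum>v\<in>nb n H u. y v) = 1"
        proof -
          consider "u = a" | "u = b" | "u = c" | "u = d" | "u \<in> ?R" using u by auto
          thus ?thesis
          proof cases
            case 5 thus ?thesis using nbs(5)[OF 5] pR[OF 5] by (simp add: y_def)
          qed (use nbs as(5) in \<open>simp_all add: y_def\<close>)
        qed
        have "(\<Sum>v\<in>closed_nbhd n (compl_graph n H) u. y v) = int (n - 3)"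
          using sc[OF u, of y] Sy Ny n4 by simp
        thus "int g dvd (\<Sum>v\<in>closed_nbhd n (compl_graph n H) u. y v)" unfolding g_def by simp
      qed
      ultimately show False using obstruction[OF AW, of "int g" b y] as(2) by blast
    qed
  next
    assume "gcd (n - 3) l = 1"
    from inv_mod[OF this] obtain s q where sq: "int (n - 3) * s = 1 + int l * q" by blast
    show "N_AW n l (compl_graph n H)"
      unfolding N_AW_def
    proof
      fix f :: "nat \<Rightarrow> int"
      define C where "C = f b + f c + (\<Sum>u\<in>?R. f (p u))"
      define \<sigma> where "\<sigma> = - C * s"
      define t where "t = (\<lambda>u. if u = a then f b - f d else if u = b then f a + \<sigma>
          else if u = c then f d + \<sigma> else if u = d then f c - f a else f (p u) + \<sigma>)"
      have tR: "\<And>u. u \<in> ?R \<Longrightarrow> t u = f (p u) + \<sigma>" unfolding t_def by auto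
      have ta: "t a = f b - f d" "t b = f a + \<sigma>" "t c = f d + \<sigma>" "t d = f c - f a"
        unfolding t_def using as(5) by auto
      have SR: "(\<Sum>u\<in>?R. t u) = (\<Sum>u\<in>?R. f (p u)) + (int n - 4) * \<sigma>"
      proof -
        have "(\<Sum>u\<in>?R. t u) = (\<Sum>u\<in>?R. f (p u) + \<sigma>)" by (rule sum.cong) (auto simp: tR)
        also have "\<dots> = (\<Sum>u\<in>?R. f (p u)) + int (card ?R) * \<sigma>" by (simp add: sum.distrib)
        finally show ?thesis using cR n4 by (simp add: of_nat_diff)
      qed
      have St: "(\<Sum>u<n. t u) = C + (int n - 2) * \<sigma>"
        using split[of t] ta SR unfolding C_def by (simp add: algebra_simps)
      have key: "\<forall>v<n. f v + (\<Sum>u\<in>closed_nbhd n (compl_graph n H) v. t u) = C + (int n - 3) * \<sigma>"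
      proof (intro allI impI)
        fix v assume v: "v < n"
        have scv: "(\<Sum>u\<in>closed_nbhd n (compl_graph n H) v. t u) = C + (int n - 2) * \<sigma> - (\<Sum>u\<in>nb n H v. t u)"
          using sc[OF v, of t] St by simp
        consider "v = a" | "v = b" | "v = c" | "v = d" | "v \<in> ?R" using v by auto
        thus "f v + (\<Sum>u\<in>closed_nbhd n (compl_graph n H) v. t u) = C + (int n - 3) * \<sigma>"
        proof cases
          case 1
          have "(\<Sum>u\<in>nb n H v. t u) = f a + \<sigma>" using 1 nbs(1) ta by simp
          thus ?thesis using scv 1 by (simp add: algebra_simps)
        next
          case 2
          have "(\<Sum>u\<in>nb n H v. t u) = f b + \<sigma>" using 2 nbs(2) ta as(5) by simp
          thus ?thesis using scv 2 by (simp add: algebra_simps)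
        next
          case 3
          have "(\<Sum>u\<in>nb n H v. t u) = f c + \<sigma>" using 3 nbs(3) ta as(5) by simp
          thus ?thesis using scv 3 by (simp add: algebra_simps)
        next
          case 4
          have "(\<Sum>u\<in>nb n H v. t u) = f d + \<sigma>" using 4 nbs(4) ta by simp
          thus ?thesis using scv 4 by (simp add: algebra_simps)
        next
          case 5
          have "t (p v) = f v + \<sigma>" using tR pR[OF 5] by auto
          hence "(\<Sum>u\<in>nb n H v. t u) = f v + \<sigma>" using nbs(5)[OF 5] by simp
          thus ?thesis using scv by (simp add: algebra_simps)
        qed
      qed
      have "\<forall>v<n. (f v + (\<Sum>u\<in>closed_nbhd n (compl_graph n H) v. t u)) mod int l = 0"
      proof (intro allI impI)
        fix v assume v: "v < n"
        have "f v + (\<Sum>u\<in>closed_nbhd n (compl_graph n H) v. t u) = C - C * (int (n - 3) * s)"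
          using key v n4 unfolding \<sigma>_def by (simp add: algebra_simps of_nat_diff)
        also have "\<dots> = int l * (- C * q)" using sq by (simp add: algebra_simps)
        finally show "(f v + (\<Sum>u\<in>closed_nbhd n (compl_graph n H) v. t u)) mod int l = 0" by simp
      qed
      thus "\<exists>t. \<forall>v<n. (f v + (\<Sum>u\<in>closed_nbhd n (compl_graph n H) v. t u)) mod int l = 0" by blast
    qed
  qed
qed



lemma Mt_remove:
  assumes "Mt R p" "x \<in> R"
  shows "Mt (R - {x, p x}) p"
  using assms unfolding Mt_def by (metis Diff_iff insert_iff singletonD)

lemma enum:
  "Mt R p \<Longrightarrow> finite R \<Longrightarrow> card R = 2 * j \<Longrightarrow>
    \<exists>\<sigma>. bij_betw \<sigma> {s..<s + 2 * j} R \<and> (\<forall>i<j. \<sigma> (s + 2 * i + 1) = p (\<sigma> (s + 2 * i)))"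
proof (induction j arbitrary: R s)
  case 0
  hence "R = {}" by simp
  thus ?case by (intro exI[of _ id]) (simp add: bij_betw_def)
next
  case (Suc j)
  have "R \<noteq> {}" using Suc.prems by auto
  then obtain x where x: "x \<in> R" by auto
  have px: "p x \<in> R" "p x \<noteq> x" using Suc.prems(1) x unfolding Mt_def by auto
  define R' where "R' = R - {x, p x}"
  have M': "Mt R' p" unfolding R'_def using Mt_remove[OF Suc.prems(1) x] .
  have cR': "card R' = 2 * j" unfolding R'_def using Suc.prems x px by (simp add: card_Diff_subset)
  obtain \<sigma>' where s': "bij_betw \<sigma>' {s + 2..<s + 2 + 2 * j} R'"
      "\<forall>i<j. \<sigma>' (s + 2 + 2 * i + 1) = p (\<sigma>' (s + 2 + 2 * i))"
    using Suc.IH[OF M' _ cR', of "s + 2"] Suc.prems(2) R'_def by auto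
  define \<sigma> where "\<sigma> = \<sigma>'(s := x, s + 1 := p x)"
  have b1: "bij_betw \<sigma> {s, s + 1} {x, p x}"
    unfolding bij_betw_def \<sigma>_def using px by auto
  have b2: "bij_betw \<sigma> {s + 2..<s + 2 + 2 * j} R'"
    using s'(1) by (rule bij_betw_cong[THEN iffD1, rotated]) (auto simp: \<sigma>_def)
  have "bij_betw \<sigma> ({s, s + 1} \<union> {s + 2..<s + 2 + 2 * j}) ({x, p x} \<union> R')"
    by (rule bij_betw_combine[OF b1 b2]) (auto simp: R'_def)
  moreover have "{s, s + 1} \<union> {s + 2..<s + 2 + 2 * j} = {s..<s + 2 * Suc j}" by auto
  moreover have "{x, p x} \<union> R' = R" using x px R'_def by auto
  ultimately have b: "bij_betw \<sigma> {s..<s + 2 * Suc j} R" by simp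
  have "\<forall>i<Suc j. \<sigma> (s + 2 * i + 1) = p (\<sigma> (s + 2 * i))"
  proof (intro allI impI)
    fix i assume i: "i < Suc j"
    show "\<sigma> (s + 2 * i + 1) = p (\<sigma> (s + 2 * i))"
    proof (cases i)
      case 0 thus ?thesis by (simp add: \<sigma>_def)
    next
      case (Suc i')
      hence "i' < j" using i by simp
      hence "\<sigma>' (s + 2 + 2 * i' + 1) = p (\<sigma>' (s + 2 + 2 * i'))" using s'(2) by blast
      moreover have "s + 2 * i + 1 = s + 2 + 2 * i' + 1" "s + 2 * i = s + 2 + 2 * i'" using Suc by auto
      ultimately show ?thesis by (simp add: \<sigma>_def)
    qed
  qed
  with b show ?case by blast
qed



lemma P4_P2s_alt: "P4_P2s n = {{0,1},{1,2},{2,3}} \<union> (\<lambda>k. {2*k, 2*k+1}) ` {k. 2 \<le> k \<and> k < n div 2}"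
  unfolding P4_P2s_def by auto

lemma P4M_iso:
  assumes ev: "even n" and P: "P4M n H a b c d p"
  shows "\<exists>\<pi>. bij_betw \<pi> {..<n} {..<n} \<and> H = (\<lambda>e. \<pi> ` e) ` P4_P2s n"
proof -
  let ?R = "{..<n} - {a,b,c,d}"
  have as: "a < n" "b < n" "c < n" "d < n" "distinct [a,b,c,d]"
    "Mt ?R p" "H = {{a,b},{b,c},{c,d}} \<union> edges ?R p" using P unfolding P4M_def by auto
  have cR: "card ?R = n - 4" using card_R4[OF as(1-5)] .
  have n4: "n \<ge> 4"
  proof -
    have "{a,b,c,d} \<subseteq> {..<n}" using as by auto
    hence "card {a,b,c,d} \<le> n" by (metis card_lessThan card_mono finite_lessThan)
    thus ?thesis using as(5) by simp
  qed
  define m where "m = n div 2"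
  have nm: "n = 2 * m" using ev m_def by simp
  have m2: "m \<ge> 2" using n4 nm by simp
  have cR2: "card ?R = 2 * (m - 2)" using cR nm m2 by simp
  obtain \<sigma> where s: "bij_betw \<sigma> {4..<4 + 2 * (m - 2)} ?R"
      "\<forall>i<m - 2. \<sigma> (4 + 2 * i + 1) = p (\<sigma> (4 + 2 * i))"
    using enum[OF as(6) finite_Diff[OF finite_lessThan] cR2, where s=4] by blast
  have e4: "4 + 2 * (m - 2) = n" using nm m2 by simp
  have sb: "bij_betw \<sigma> {4..<n} ?R" using s(1) e4 by simp
  have sp: "\<And>k. 2 \<le> k \<Longrightarrow> k < m \<Longrightarrow> \<sigma> (2 * k + 1) = p (\<sigma> (2 * k))"
  proof -
    fix k assume k: "2 \<le> k" "k < m"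
    hence "k - 2 < m - 2" by simp
    hence "\<sigma> (4 + 2 * (k - 2) + 1) = p (\<sigma> (4 + 2 * (k - 2)))" using s(2) by blast
    moreover have "4 + 2 * (k - 2) = 2 * k" using k by simp
    ultimately show "\<sigma> (2 * k + 1) = p (\<sigma> (2 * k))" by simp
  qed
  have sR: "\<And>j. 4 \<le> j \<Longrightarrow> j < n \<Longrightarrow> \<sigma> j \<in> ?R"
  proof -
    fix j assume "4 \<le> j" "j < n"
    hence "j \<in> {4..<n}" by simp
    thus "\<sigma> j \<in> ?R" using bij_betwE[OF sb] by blast
  qed
  define \<pi> where "\<pi> = (\<lambda>v. if v = 0 then a else if v = 1 then b else if v = 2 then c else if v = 3 then d else \<sigma> v)"
  have b1: "bij_betw \<pi> {0,1,2,3} {a,b,c,d}"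
    unfolding bij_betw_def inj_on_def \<pi>_def using as(5) by auto
  have b2: "bij_betw \<pi> {4..<n} ?R"
    using sb by (rule bij_betw_cong[THEN iffD1, rotated]) (auto simp: \<pi>_def)
  have "bij_betw \<pi> ({0,1,2,3} \<union> {4..<n}) ({a,b,c,d} \<union> ?R)"
    by (rule bij_betw_combine[OF b1 b2]) auto
  moreover have "{0,1,2,3} \<union> {4..<n} = {..<n}" using n4 by auto
  moreover have "{a,b,c,d} \<union> ?R = {..<n}" using as by auto
  ultimately have bij: "bij_betw \<pi> {..<n} {..<n}" by simp
  have img1: "(\<lambda>e. \<pi> ` e) ` {{0,1},{1,2},{2,3}} = {{a,b},{b,c},{c,d}}"
    by (simp add: \<pi>_def insert_commute)
  have pk: "\<And>k. 2 \<le> k \<Longrightarrow> \<pi> ` {2*k, 2*k+1} = {\<sigma> (2*k), \<sigma> (2*k+1)}"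
    by (simp add: \<pi>_def)
  have img2: "(\<lambda>e. \<pi> ` e) ` (\<lambda>k. {2*k, 2*k+1}) ` {k. 2 \<le> k \<and> k < m} = edges ?R p"
  proof
    show "(\<lambda>e. \<pi> ` e) ` (\<lambda>k. {2*k, 2*k+1}) ` {k. 2 \<le> k \<and> k < m} \<subseteq> edges ?R p"
    proof
      fix e assume "e \<in> (\<lambda>e. \<pi> ` e) ` (\<lambda>k. {2*k, 2*k+1}) ` {k. 2 \<le> k \<and> k < m}"
      then obtain k where k: "2 \<le> k" "k < m" "e = \<pi> ` {2*k, 2*k+1}" by auto
      hence "e = {\<sigma> (2*k), p (\<sigma> (2*k))}" using pk sp by simp
      moreover have "\<sigma> (2*k) \<in> ?R" using sR k nm by simp
      ultimately show "e \<in> edges ?R p" unfolding edges_def by blast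
    qed
  next
    show "edges ?R p \<subseteq> (\<lambda>e. \<pi> ` e) ` (\<lambda>k. {2*k, 2*k+1}) ` {k. 2 \<le> k \<and> k < m}"
    proof
      fix e assume "e \<in> edges ?R p"
      then obtain x where x: "x \<in> ?R" "e = {x, p x}" unfolding edges_def by auto
      obtain j where j: "j \<in> {4..<n}" "\<sigma> j = x" using sb x(1) unfolding bij_betw_def by (metis imageE)
      define k where "k = j div 2"
      have k: "2 \<le> k" "k < m" using j nm k_def by auto
      show "e \<in> (\<lambda>e. \<pi> ` e) ` (\<lambda>k. {2*k, 2*k+1}) ` {k. 2 \<le> k \<and> k < m}"
      proof (cases "even j")
        case True
        hence "j = 2 * k" using k_def by simp
        hence "e = \<pi> ` {2*k, 2*k+1}" using x j pk[OF k(1)] sp[OF k] by simp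
        thus ?thesis using k by blast
      next
        case False
        hence jk: "j = 2 * k + 1" using k_def by simp
        have yR: "\<sigma> (2*k) \<in> ?R" using sR k nm by simp
        have "x = p (\<sigma> (2*k))" using j jk sp[OF k] by simp
        hence "p x = \<sigma> (2*k)" using yR as(6) unfolding Mt_def by auto
        hence "e = {\<sigma> (2*k), \<sigma> (2*k+1)}" using x j jk by auto
        hence "e = \<pi> ` {2*k, 2*k+1}" using pk[OF k(1)] by simp
        thus ?thesis using k by blast
      qed
    qed
  qed
  have "(\<lambda>e. \<pi> ` e) ` P4_P2s n = H"
    unfolding P4_P2s_alt image_Un img1 m_def[symmetric] img2 using as(7) by simp
  thus ?thesis using bij by blast
qed



abbreviation img :: "(nat \<Rightarrow> nat) \<Rightarrow> nat set set \<Rightarrow> nat set set" where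
  "img \<pi> A \<equiv> (\<lambda>e. \<pi> ` e) ` A"

lemma graph_Pow: "is_graph n A \<Longrightarrow> A \<subseteq> Pow {..<n}"
  unfolding is_graph_def by auto

lemma img_card:
  assumes "bij_betw \<pi> {..<n} {..<n}" "is_graph n A"
  shows "card (img \<pi> A) = card A"
proof -
  have "inj_on (image \<pi>) (Pow {..<n})" using assms(1) inj_on_image_Pow bij_betw_def by blast
  hence "inj_on (image \<pi>) A" using graph_Pow[OF assms(2)] inj_on_subset by blast
  thus ?thesis by (rule card_image)
qed

lemma img_all_pairs:
  assumes b: "bij_betw \<pi> {..<n} {..<n}"
  shows "img \<pi> (all_pairs n) = all_pairs n"
proof
  have inj: "inj_on \<pi> {..<n}" and im: "\<pi> ` {..<n} = {..<n}" using b unfolding bij_betw_def by auto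
  show "img \<pi> (all_pairs n) \<subseteq> all_pairs n"
  proof
    fix e assume "e \<in> img \<pi> (all_pairs n)"
    then obtain u v where uv: "e = \<pi> ` {u,v}" "u < n" "v < n" "u \<noteq> v" unfolding all_pairs_def by auto
    have "\<pi> u \<noteq> \<pi> v" using inj uv inj_on_def by (metis lessThan_iff)
    moreover have "\<pi> u < n" "\<pi> v < n" using im uv by auto
    ultimately show "e \<in> all_pairs n" unfolding all_pairs_def using uv by auto
  qed
next
  have inj: "inj_on \<pi> {..<n}" and im: "\<pi> ` {..<n} = {..<n}" using b unfolding bij_betw_def by auto
  show "all_pairs n \<subseteq> img \<pi> (all_pairs n)"
  proof
    fix e assume "e \<in> all_pairs n"
    then obtain u v where uv: "e = {u,v}" "u < n" "v < n" "u \<noteq> v" unfolding all_pairs_def by auto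
    obtain x where x: "x < n" "\<pi> x = u" using im uv by (metis imageE lessThan_iff)
    obtain y where y: "y < n" "\<pi> y = v" using im uv by (metis imageE lessThan_iff)
    have "x \<noteq> y" using x y uv by auto
    hence "{x,y} \<in> all_pairs n" unfolding all_pairs_def using x y by auto
    moreover have "e = \<pi> ` {x,y}" using x y uv by auto
    ultimately show "e \<in> img \<pi> (all_pairs n)" by blast
  qed
qed

lemma img_graph:
  assumes "bij_betw \<pi> {..<n} {..<n}" "is_graph n A"
  shows "is_graph n (img \<pi> A)"
  using assms img_all_pairs[OF assms(1)] unfolding is_graph_all_pairs by blast

lemma img_compl:
  assumes b: "bij_betw \<pi> {..<n} {..<n}" and G: "is_graph n A"
  shows "img \<pi> (compl_graph n A) = compl_graph n (img \<pi> A)"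
proof -
  have "inj_on (image \<pi>) (Pow {..<n})" using b inj_on_image_Pow bij_betw_def by blast
  moreover have "all_pairs n \<subseteq> Pow {..<n}" unfolding all_pairs_def by auto
  ultimately have "img \<pi> (all_pairs n - A) = img \<pi> (all_pairs n) - img \<pi> A"
    using graph_Pow[OF G] by (intro inj_on_image_set_diff) auto
  thus ?thesis unfolding compl_graph_def img_all_pairs[OF b] .
qed

lemma img_comp: "img \<pi> (img \<rho> A) = img (\<pi> \<circ> \<rho>) A"
  by (simp add: image_comp image_image)

lemma img_inv:
  assumes b: "bij_betw \<pi> {..<n} {..<n}" and G: "is_graph n A"
  shows "img (inv_into {..<n} \<pi>) (img \<pi> A) = A"
proof -
  have inj: "inj_on \<pi> {..<n}" using b unfolding bij_betw_def by auto
  have "\<And>e. e \<in> A \<Longrightarrow> inv_into {..<n} \<pi> ` \<pi> ` e = e"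
  proof -
    fix e assume "e \<in> A"
    hence "e \<subseteq> {..<n}" using graph_Pow[OF G] by auto
    thus "inv_into {..<n} \<pi> ` \<pi> ` e = e" using inj by (simp add: image_image subset_iff inv_into_f_f cong: image_cong)
  qed
  thus ?thesis by (simp add: image_image)
qed

lemma img_closed:
  assumes b: "bij_betw \<pi> {..<n} {..<n}" and G: "is_graph n E" and v: "v < n"
  shows "closed_nbhd n (img \<pi> E) (\<pi> v) = \<pi> ` closed_nbhd n E v"
proof -
  have inj: "inj_on \<pi> {..<n}" and im: "\<pi> ` {..<n} = {..<n}" using b unfolding bij_betw_def by auto
  have injP: "inj_on (image \<pi>) (Pow {..<n})" using inj inj_on_image_Pow by blast
  have mem: "\<And>x. x < n \<Longrightarrow> {\<pi> x, \<pi> v} \<in> img \<pi> E \<longleftrightarrow> {x, v} \<in> E"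
  proof -
    fix x assume x: "x < n"
    have "{\<pi> x, \<pi> v} = \<pi> ` {x,v}" by simp
    show "{\<pi> x, \<pi> v} \<in> img \<pi> E \<longleftrightarrow> {x, v} \<in> E"
    proof
      assume "{\<pi> x, \<pi> v} \<in> img \<pi> E"
      then obtain e where e: "e \<in> E" "\<pi> ` e = \<pi> ` {x,v}" by auto
      have "e \<in> Pow {..<n}" using e graph_Pow[OF G] by auto
      moreover have "{x,v} \<in> Pow {..<n}" using x v by auto
      ultimately have "e = {x,v}" using injP e(2) inj_on_def by metis
      thus "{x, v} \<in> E" using e by simp
    next
      assume "{x, v} \<in> E"
      hence "\<pi> ` {x,v} \<in> img \<pi> E" by (rule imageI)
      thus "{\<pi> x, \<pi> v} \<in> img \<pi> E" by simp
    qed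
  qed
  show ?thesis
  proof
    show "closed_nbhd n (img \<pi> E) (\<pi> v) \<subseteq> \<pi> ` closed_nbhd n E v"
    proof
      fix u assume u: "u \<in> closed_nbhd n (img \<pi> E) (\<pi> v)"
      hence un: "u < n" unfolding closed_nbhd_def by auto
      then obtain x where x: "x < n" "u = \<pi> x" using im by (metis imageE lessThan_iff)
      have "x = v \<or> {x, v} \<in> E"
      proof (cases "x = v")
        case False
        hence "u \<noteq> \<pi> v" using x v inj inj_on_def by (metis lessThan_iff)
        hence "{\<pi> x, \<pi> v} \<in> img \<pi> E" using u x unfolding closed_nbhd_def by auto
        thus ?thesis using mem x by blast
      qed simp
      hence "x \<in> closed_nbhd n E v" unfolding closed_nbhd_def using x by auto
      thus "u \<in> \<pi> ` closed_nbhd n E v" using x by auto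
    qed
  next
    show "\<pi> ` closed_nbhd n E v \<subseteq> closed_nbhd n (img \<pi> E) (\<pi> v)"
    proof
      fix u assume "u \<in> \<pi> ` closed_nbhd n E v"
      then obtain x where x: "x \<in> closed_nbhd n E v" "u = \<pi> x" by auto
      hence xn: "x < n" "x = v \<or> {x, v} \<in> E" unfolding closed_nbhd_def by auto
      have "\<pi> x < n" using im xn by auto
      moreover have "\<pi> x = \<pi> v \<or> {\<pi> x, \<pi> v} \<in> img \<pi> E" using xn mem by auto
      ultimately show "u \<in> closed_nbhd n (img \<pi> E) (\<pi> v)" unfolding closed_nbhd_def using x by auto
    qed
  qed
qed

lemma img_NAW:
  assumes b: "bij_betw \<pi> {..<n} {..<n}" and G: "is_graph n E" and AW: "N_AW n l E"
  shows "N_AW n l (img \<pi> E)"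
  unfolding N_AW_def
proof
  fix f :: "nat \<Rightarrow> int"
  have inj: "inj_on \<pi> {..<n}" and im: "\<pi> ` {..<n} = {..<n}" using b unfolding bij_betw_def by auto
  obtain t where t: "\<forall>v<n. ((f \<circ> \<pi>) v + (\<Sum>u \<in> closed_nbhd n E v. t u)) mod int l = 0"
    using AW unfolding N_AW_def by blast
  define t' where "t' = t \<circ> inv_into {..<n} \<pi>"
  have "\<forall>w<n. (f w + (\<Sum>u \<in> closed_nbhd n (img \<pi> E) w. t' u)) mod int l = 0"
  proof (intro allI impI)
    fix w assume "w < n"
    then obtain v where v: "v < n" "w = \<pi> v" using im by (metis imageE lessThan_iff)
    have sub: "closed_nbhd n E v \<subseteq> {..<n}" by (rule closed_sub)
    have "(\<Sum>u \<in> closed_nbhd n (img \<pi> E) w. t' u) = (\<Sum>u \<in> \<pi> ` closed_nbhd n E v. t' u)"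
      using img_closed[OF b G v(1)] v(2) by simp
    also have "\<dots> = (\<Sum>x \<in> closed_nbhd n E v. t' (\<pi> x))"
      by (rule sum.reindex[unfolded comp_def]) (rule inj_on_subset[OF inj sub])
    also have "\<dots> = (\<Sum>x \<in> closed_nbhd n E v. t x)"
      using sub inj by (intro sum.cong refl) (auto simp: t'_def)
    finally show "(f w + (\<Sum>u \<in> closed_nbhd n (img \<pi> E) w. t' u)) mod int l = 0"
      using t v by simp
  qed
  thus "\<exists>t. \<forall>v<n. (f v + (\<Sum>u \<in> closed_nbhd n (img \<pi> E) v. t u)) mod int l = 0" by blast
qed



definition p0 :: "nat \<Rightarrow> nat" where "p0 v = (if even v then v + 1 else v - 1)"

lemma p0_lt: "even n \<Longrightarrow> v < n \<Longrightarrow> p0 v < n"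
  unfolding p0_def by (cases "even v") (auto, presburger)

lemma p0_p0: "p0 (p0 v) = v"
  unfolding p0_def by (cases "even v") auto

lemma p0_ne: "p0 v \<noteq> v"
  unfolding p0_def by presburger

lemma Mt_p0: "even n \<Longrightarrow> Mt {..<n} p0"
  unfolding Mt_def using p0_lt p0_p0 p0_ne by auto

lemma p0_ge4: "4 \<le> v \<Longrightarrow> 4 \<le> p0 v"
  unfolding p0_def by (cases "even v") (auto, presburger)

lemma Mt_p0_R: "even n \<Longrightarrow> Mt ({..<n} - {0,1,2,3}) p0"
proof -
  assume ev: "even n"
  have "\<And>v. v \<in> {..<n} - {0,1,2,3} \<Longrightarrow> p0 v \<in> {..<n} - {0,1,2,3}"
  proof -
    fix v assume v: "v \<in> {..<n} - {0,1,2,3}"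
    hence "4 \<le> v" "v < n" by auto
    hence "4 \<le> p0 v" "p0 v < n" using p0_ge4 p0_lt ev by auto
    thus "p0 v \<in> {..<n} - {0,1,2,3}" by auto
  qed
  thus ?thesis unfolding Mt_def using p0_p0 p0_ne by blast
qed

lemma P4_P2s_P4M:
  assumes ev: "even n" and n4: "n \<ge> 4"
  shows "P4M n (P4_P2s n) 0 1 2 3 p0"
proof -
  let ?R = "{..<n} - {0,1,2,3::nat}"
  have "edges ?R p0 = {{2 * k, 2 * k + 1} | k. 2 \<le> k \<and> k < n div 2}"
  proof
    show "edges ?R p0 \<subseteq> {{2 * k, 2 * k + 1} | k. 2 \<le> k \<and> k < n div 2}"
    proof
      fix e assume "e \<in> edges ?R p0"
      then obtain v where v: "v \<in> ?R" "e = {v, p0 v}" unfolding edges_def by auto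
      define k where "k = v div 2"
      have k: "2 \<le> k" "k < n div 2" using v ev k_def by auto
      have "e = {2 * k, 2 * k + 1}"
      proof (cases "even v")
        case True thus ?thesis using v k_def by (auto simp: p0_def)
      next
        case False
        hence "v = 2 * k + 1" using k_def by simp
        thus ?thesis using v False by (auto simp: p0_def)
      qed
      thus "e \<in> {{2 * k, 2 * k + 1} | k. 2 \<le> k \<and> k < n div 2}" using k by blast
    qed
  next
    show "{{2 * k, 2 * k + 1} | k. 2 \<le> k \<and> k < n div 2} \<subseteq> edges ?R p0"
    proof
      fix e assume "e \<in> {{2 * k, 2 * k + 1} | k. 2 \<le> k \<and> k < n div 2}"
      then obtain k where k: "2 \<le> k" "k < n div 2" "e = {2 * k, 2 * k + 1}" by auto
      have "2 * k \<in> ?R" using k ev by auto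
      moreover have "p0 (2 * k) = 2 * k + 1" by (simp add: p0_def)
      ultimately show "e \<in> edges ?R p0" unfolding edges_def using k by force
    qed
  qed
  hence "P4_P2s n = {{0,1},{1,2},{2,3}} \<union> edges ?R p0" unfolding P4_P2s_def by simp
  thus ?thesis unfolding P4M_def using n4 Mt_p0_R[OF ev] by simp
qed

definition pc :: "nat \<Rightarrow> nat \<Rightarrow> nat" where "pc m v = (if v < m then v + m else v - m)"

lemma corona_P4M:
  assumes ab: "a < m" "b < m" "a \<noteq> b"
  shows "P4M (2 * m) (corona m {{a,b}}) (a + m) a b (b + m) (pc m)"
proof -
  let ?n = "2 * m"
  let ?R = "{..<?n} - {a + m, a, b, b + m}"
  have Mt: "Mt ?R (pc m)"
    unfolding Mt_def
  proof (intro ballI conjI)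
    fix v assume v: "v \<in> ?R"
    show "pc m v \<in> ?R"
    proof (cases "v < m")
      case True
      hence "pc m v = v + m" by (simp add: pc_def)
      thus ?thesis using v True ab by auto
    next
      case False
      hence "pc m v = v - m" by (simp add: pc_def)
      thus ?thesis using v False ab by auto
    qed
    show "pc m v \<noteq> v" using ab v unfolding pc_def by auto
    show "pc m (pc m v) = v" using v unfolding pc_def by auto
  qed
  have eq: "corona m {{a,b}} = {{a + m, a}, {a, b}, {b, b + m}} \<union> edges ?R (pc m)"
  proof
    show "corona m {{a,b}} \<subseteq> {{a + m, a}, {a, b}, {b, b + m}} \<union> edges ?R (pc m)"
    proof
      fix e assume "e \<in> corona m {{a,b}}"
      hence "e = {a,b} \<or> (\<exists>i<m. e = {i, i + m})" unfolding corona_def by auto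
      thus "e \<in> {{a + m, a}, {a, b}, {b, b + m}} \<union> edges ?R (pc m)"
      proof
        assume "\<exists>i<m. e = {i, i + m}"
        then obtain i where i: "i < m" "e = {i, i + m}" by auto
        show ?thesis
        proof (cases "i = a \<or> i = b")
          case True thus ?thesis using i by (auto simp: insert_commute)
        next
          case False
          hence iR: "i \<in> ?R" using i by auto
          have pci: "pc m i = i + m" using i by (simp add: pc_def)
          have "{i, pc m i} \<in> edges ?R (pc m)" unfolding edges_def using iR by blast
          hence "e \<in> edges ?R (pc m)" using i pci by simp
          thus ?thesis by blast
        qed
      qed simp
    qed
  next
    show "{{a + m, a}, {a, b}, {b, b + m}} \<union> edges ?R (pc m) \<subseteq> corona m {{a,b}}"
    proof
      fix e assume e: "e \<in> {{a + m, a}, {a, b}, {b, b + m}} \<union> edges ?R (pc m)"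
      show "e \<in> corona m {{a,b}}"
      proof (cases "e \<in> edges ?R (pc m)")
        case True
        then obtain v where v: "v \<in> ?R" "e = {v, pc m v}" unfolding edges_def by auto
        show ?thesis
        proof (cases "v < m")
          case True thus ?thesis using v unfolding corona_def pc_def by auto
        next
          case False
          hence "v - m < m" "e = {v - m, v - m + m}" using v unfolding pc_def by (auto simp: insert_commute)
          thus ?thesis unfolding corona_def by blast
        qed
      next
        case False
        hence "e = {a + m, a} \<or> e = {a, b} \<or> e = {b, b + m}" using e by auto
        thus ?thesis unfolding corona_def using ab by (auto simp: insert_commute)
      qed
    qed
  qed
  show ?thesis unfolding P4M_def using ab Mt eq by auto
qed



lemma sum_split4_nat:
  fixes n :: nat
  assumes "a < n" "b < n" "c < n" "d < n" "distinct [a,b,c,d]"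
  shows "(\<Sum>u<n. (t u::nat)) = t a + t b + t c + t d + (\<Sum>u\<in>{..<n} - {a,b,c,d}. t u)"
proof -
  have "(\<Sum>u<n. t u) = (\<Sum>u\<in>{a,b,c,d}. t u) + (\<Sum>u\<in>{..<n} - {a,b,c,d}. t u)"
    using assms by (subst sum.subset_diff[of "{a,b,c,d}" "{..<n}"]) auto
  thus ?thesis using assms by simp
qed

lemma P4M_card:
  assumes P: "P4M n H a b c d p" and ev: "even n"
  shows "card H = n div 2 + 1"
proof -
  let ?R = "{..<n} - {a,b,c,d}"
  have as: "a < n" "b < n" "c < n" "d < n" "distinct [a,b,c,d]" using P unfolding P4M_def by auto
  note nbs = P4M_nb[OF P]
  have cR: "card ?R = n - 4" using card_R4[OF as] .
  have n4: "n \<ge> 4"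
  proof -
    have "{a,b,c,d} \<subseteq> {..<n}" using as by auto
    hence "card {a,b,c,d} \<le> n" by (metis card_lessThan card_mono finite_lessThan)
    thus ?thesis using as(5) by simp
  qed
  have "(\<Sum>u\<in>?R. card (nb n H u)) = (\<Sum>u\<in>?R. 1)" by (rule sum.cong) (auto simp: nbs(5))
  hence "(\<Sum>u\<in>?R. card (nb n H u)) = n - 4" using cR by simp
  hence "(\<Sum>u<n. card (nb n H u)) = n + 2"
    using sum_split4_nat[OF as, of "\<lambda>u. card (nb n H u)"] nbs as(5) n4 by simp
  hence "2 * card H = n + 2" using handshake[OF P4M_graph[OF P]] by simp
  thus ?thesis using ev by presburger
qed

lemma PM_card:
  assumes M: "Mt {..<n} p" and HE: "H = edges {..<n} p" and ev: "even n"
  shows "card H = n div 2"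
proof -
  have G: "is_graph n H" using edges_graph[OF M] HE by auto
  have "(\<Sum>u<n. card (nb n H u)) = (\<Sum>u<n. 1)" by (rule sum.cong) (auto simp: PM_nb[OF M HE])
  hence "2 * card H = n" using handshake[OF G] by simp
  thus ?thesis using ev by presburger
qed

lemma cls:
  assumes ev: "even n" and evl: "even l" and l: "l \<ge> 1" and G: "is_graph n E" and AW: "N_AW n l E"
    and c: "card (compl_graph n E) \<le> n div 2 + 1" and n1: "n \<ge> 1"
  shows "(card (compl_graph n E) = n div 2 \<and> gcd (n - 1) l = 1) \<or>
         (card (compl_graph n E) = n div 2 + 1 \<and> gcd (n - 3) l = 1 \<and>
            (\<exists>a b c d p. P4M n (compl_graph n E) a b c d p))"
proof -
  let ?H = "compl_graph n E"
  have AW': "N_AW n l (compl_graph n ?H)" using AW compl_compl[OF G] by simp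
  interpret ctx n l ?H using compl_is_graph AW' evl by unfold_locales auto
  have "(Mt {..<n} p \<and> ?H = edges {..<n} p) \<or> (\<exists>a b c d. P4M n ?H a b c d p)"
    using classify[OF ev c] .
  thus ?thesis
  proof
    assume pm: "Mt {..<n} p \<and> ?H = edges {..<n} p"
    have "gcd (n - 1) l = 1" using PM_NAW[of n p ?H l] pm AW' l n1 by auto
    moreover have "card ?H = n div 2" using PM_card pm ev by blast
    ultimately show ?thesis by blast
  next
    assume "\<exists>a b c d. P4M n ?H a b c d p"
    then obtain a b c d where P: "P4M n ?H a b c d p" by blast
    have "gcd (n - 3) l = 1" using P4M_NAW[OF P l] AW' by simp
    moreover have "card ?H = n div 2 + 1" using P4M_card[OF P ev] .
    ultimately show ?thesis using P by blast
  qed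
qed

lemma NAW_empty: "N_AW n l {}"
  unfolding N_AW_def
proof
  fix f :: "nat \<Rightarrow> int"
  have "\<And>v. v < n \<Longrightarrow> closed_nbhd n {} v = {v}" unfolding closed_nbhd_def by auto
  hence "\<forall>v<n. (f v + (\<Sum>u\<in>closed_nbhd n {} v. (- f) u)) mod int l = 0" by simp
  thus "\<exists>t. \<forall>v<n. (f v + (\<Sum>u\<in>closed_nbhd n {} v. t u)) mod int l = 0" by blast
qed

lemma maxN_fin: "finite {card E | E. is_graph n E \<and> N_AW n l E}"
proof -
  have "{card E | E. is_graph n E \<and> N_AW n l E} \<subseteq> {..card (all_pairs n)}"
  proof
    fix x assume "x \<in> {card E | E. is_graph n E \<and> N_AW n l E}"
    then obtain E where E: "x = card E" "is_graph n E" by blast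
    have "card E \<le> card (all_pairs n)"
      using E(2) unfolding is_graph_all_pairs by (rule card_mono[OF finite_all_pairs])
    thus "x \<in> {..card (all_pairs n)}" using E by simp
  qed
  thus ?thesis by (rule finite_subset) simp
qed

lemma maxN_ge: "is_graph n E \<Longrightarrow> N_AW n l E \<Longrightarrow> card E \<le> maxN n l"
  unfolding maxN_def using maxN_fin by (intro Max_ge) auto

lemma maxN_in: "\<exists>E. is_graph n E \<and> N_AW n l E \<and> card E = maxN n l"
proof -
  have ne: "{card E | E. is_graph n E \<and> N_AW n l E} \<noteq> {}"
    using NAW_empty[of n l] unfolding is_graph_def by auto
  have "maxN n l \<in> {card E | E. is_graph n E \<and> N_AW n l E}"
    unfolding maxN_def using Max_in[OF maxN_fin ne] .
  thus ?thesis by auto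
qed

lemma C2_bound: "n \<ge> 4 \<Longrightarrow> n choose 2 \<ge> n div 2 + 2"
proof -
  assume n: "n \<ge> 4"
  have "n * (n - 1) \<ge> n * 3" using n by (intro mult_le_mono2) simp
  hence "n * (n - 1) div 2 \<ge> n * 3 div 2" by (rule div_le_mono)
  moreover have "n * 3 div 2 \<ge> n div 2 + 2" using n by linarith
  ultimately show ?thesis by (simp add: choose_two)
qed

lemma corona_graph:
  assumes "is_graph m Hh" "m > 0"
  shows "is_graph (2 * m) (corona m Hh)"
  using assms unfolding is_graph_def corona_def by fastforce

lemma corona_card:
  assumes "is_graph m Hh"
  shows "card (corona m Hh) = card Hh + m"
proof -
  let ?Pd = "(\<lambda>i. {i, i + m}) ` {..<m}"
  have "corona m Hh = Hh \<union> ?Pd" unfolding corona_def by auto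
  moreover have "Hh \<inter> ?Pd = {}"
  proof -
    have "\<And>i. i < m \<Longrightarrow> {i, i + m} \<notin> Hh"
    proof
      fix i assume i: "i < m" "{i, i + m} \<in> Hh"
      then obtain u v where "{i, i + m} = {u,v}" "u < m" "v < m" using assms unfolding is_graph_def by blast
      thus False by (auto simp: doubleton_eq_iff)
    qed
    thus ?thesis by auto
  qed
  moreover have "finite Hh" using finite_graph[OF assms] .
  moreover have "card ?Pd = m"
  proof -
    have "inj_on (\<lambda>i. {i, i + m}) {..<m}" unfolding inj_on_def by (auto simp: doubleton_eq_iff)
    thus ?thesis by (simp add: card_image)
  qed
  ultimately show ?thesis by (simp add: card_Un_disjoint)
qed



theorem proposition4p12:
  fixes n l :: nat
  assumes "even n" and "even l" and "n \<ge> 4" and "l \<ge> 2"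
  shows "(maxN n l = (n choose 2) - (n div 2 + 1) \<longleftrightarrow>
            gcd (n - 1) l \<noteq> 1 \<and> gcd (n - 3) l = 1)
       \<and> (gcd (n - 1) l \<noteq> 1 \<and> gcd (n - 3) l = 1 \<longrightarrow>
            (\<forall>E. extremal n l E \<longleftrightarrow>
                   graph_iso n (compl_graph n (P4_P2s n)) E))
       \<and> (\<forall>G. pendant n G \<and> card G = n div 2 + 1 \<longleftrightarrow> graph_iso n (P4_P2s n) G)"
proof -
  note ev = assms(1) and evl = assms(2) and n4 = assms(3)
  have l1: "l \<ge> 1" using assms(4) by simp
  have n1: "n \<ge> 1" using n4 by simp
  define m where "m = n div 2"
  have nm: "n = 2 * m" using ev m_def by simp
  have m2: "m \<ge> 2" using n4 nm by simp
  define C2 where "C2 = n choose 2"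
  have C2b: "C2 \<ge> m + 2" using C2_bound[OF n4] C2_def m_def by simp
  define P where "P = P4_P2s n"
  have PP: "P4M n P 0 1 2 3 p0" using P4_P2s_P4M[OF ev n4] P_def by simp
  have PG: "is_graph n P" using P4M_graph[OF PP] .
  have Pc: "card P = m + 1" using P4M_card[OF PP ev] m_def by simp
  have cPc: "card (compl_graph n P) = C2 - (m + 1)" using card_compl[OF PG] Pc C2_def by simp
  have PNAW: "N_AW n l (compl_graph n P) \<longleftrightarrow> gcd (n - 3) l = 1" using P4M_NAW[OF PP l1] .
  have cc: "\<And>E. is_graph n E \<Longrightarrow> card E = C2 - card (compl_graph n E) \<and> card (compl_graph n E) \<le> C2"
  proof -
    fix E assume E: "is_graph n E"
    have "card (compl_graph n (compl_graph n E)) = C2 - card (compl_graph n E)"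
      using card_compl[OF compl_is_graph] C2_def by simp
    moreover have "card (compl_graph n E) \<le> C2"
      using card_compl[OF E] C2_def by simp
    ultimately show "card E = C2 - card (compl_graph n E) \<and> card (compl_graph n E) \<le> C2"
      using compl_compl[OF E] by simp
  qed
  have part1: "maxN n l = C2 - (m + 1) \<longleftrightarrow> gcd (n - 1) l \<noteq> 1 \<and> gcd (n - 3) l = 1"
  proof
    assume mx: "maxN n l = C2 - (m + 1)"
    have g1: "gcd (n - 1) l \<noteq> 1"
    proof
      assume g: "gcd (n - 1) l = 1"
      define H0 where "H0 = edges {..<n} p0"
      have M0: "Mt {..<n} p0" using Mt_p0[OF ev] .
      have G0: "is_graph n H0" using edges_graph[OF M0] H0_def by simp
      have "N_AW n l (compl_graph n H0)" using PM_NAW[OF M0 H0_def l1 n1] g by simp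
      hence "card (compl_graph n H0) \<le> maxN n l" using maxN_ge compl_is_graph by blast
      moreover have "card (compl_graph n H0) = C2 - m"
        using card_compl[OF G0] PM_card[OF M0 H0_def ev] C2_def m_def by simp
      ultimately show False using mx C2b by linarith
    qed
    obtain E where E: "is_graph n E" "N_AW n l E" "card E = maxN n l" using maxN_in by blast
    have "card (compl_graph n E) = m + 1" using cc[OF E(1)] E(3) mx C2b by linarith
    hence "gcd (n - 3) l = 1" using cls[OF ev evl l1 E(1) E(2) _ n1] m_def by auto
    with g1 show "gcd (n - 1) l \<noteq> 1 \<and> gcd (n - 3) l = 1" by simp
  next
    assume cnd: "gcd (n - 1) l \<noteq> 1 \<and> gcd (n - 3) l = 1"
    have "card (compl_graph n P) \<le> maxN n l"
      using maxN_ge[OF compl_is_graph] PNAW cnd by blast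
    moreover have "maxN n l \<le> C2 - (m + 1)"
    proof -
      obtain E where E: "is_graph n E" "N_AW n l E" "card E = maxN n l" using maxN_in by blast
      have "\<not> card (compl_graph n E) \<le> m"
      proof
        assume le: "card (compl_graph n E) \<le> m"
        hence "card (compl_graph n E) = m \<and> gcd (n - 1) l = 1 \<or> card (compl_graph n E) = m + 1"
          using cls[OF ev evl l1 E(1) E(2) _ n1] m_def by auto
        thus False using le cnd by auto
      qed
      thus ?thesis using cc[OF E(1)] E(3) by linarith
    qed
    ultimately show "maxN n l = C2 - (m + 1)" using cPc by simp
  qed
  have part2: "gcd (n - 1) l \<noteq> 1 \<and> gcd (n - 3) l = 1 \<longrightarrow>
            (\<forall>E. extremal n l E \<longleftrightarrow> graph_iso n (compl_graph n P) E)"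
  proof (intro impI allI)
    fix E assume cnd: "gcd (n - 1) l \<noteq> 1 \<and> gcd (n - 3) l = 1"
    hence mx: "maxN n l = C2 - (m + 1)" using part1 by simp
    show "extremal n l E \<longleftrightarrow> graph_iso n (compl_graph n P) E"
    proof
      assume "extremal n l E"
      hence E: "is_graph n E" "N_AW n l E" "card E = C2 - (m + 1)" unfolding extremal_def using mx by auto
      have "card (compl_graph n E) = m + 1" using cc[OF E(1)] E(3) C2b by linarith
      then obtain a b c d p where Pm: "P4M n (compl_graph n E) a b c d p"
        using cls[OF ev evl l1 E(1) E(2) _ n1] m_def by auto
      obtain \<pi> where \<pi>: "bij_betw \<pi> {..<n} {..<n}" "compl_graph n E = img \<pi> P"
        using P4M_iso[OF ev Pm] P_def by blast
      have "E = compl_graph n (img \<pi> P)" using \<pi>(2) compl_compl[OF E(1)] by metis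
      also have "\<dots> = img \<pi> (compl_graph n P)" using img_compl[OF \<pi>(1) PG] by simp
      finally show "graph_iso n (compl_graph n P) E" unfolding graph_iso_def using \<pi>(1) by blast
    next
      assume "graph_iso n (compl_graph n P) E"
      then obtain \<pi> where \<pi>: "bij_betw \<pi> {..<n} {..<n}" "E = img \<pi> (compl_graph n P)"
        unfolding graph_iso_def by blast
      have "is_graph n E" using img_graph[OF \<pi>(1) compl_is_graph] \<pi>(2) by simp
      moreover have "N_AW n l E" using img_NAW[OF \<pi>(1) compl_is_graph] PNAW cnd \<pi>(2) by simp
      moreover have "card E = C2 - (m + 1)" using img_card[OF \<pi>(1) compl_is_graph] \<pi>(2) cPc by simp
      ultimately show "extremal n l E" unfolding extremal_def using mx by simp
    qed
  qed
  have part3: "\<forall>G. pendant n G \<and> card G = m + 1 \<longleftrightarrow> graph_iso n P G"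
  proof (intro allI iffI)
    fix G assume "pendant n G \<and> card G = m + 1"
    then obtain m' Hh where G: "is_graph n G" "card G = m + 1" "2 * m' = n" "is_graph m' Hh"
        "graph_iso n (corona m' Hh) G" unfolding pendant_def by blast
    have mm: "m' = m" using G(3) nm by simp
    obtain \<pi> where \<pi>: "bij_betw \<pi> {..<n} {..<n}" "G = img \<pi> (corona m Hh)"
      using G(5) mm unfolding graph_iso_def by blast
    have cg: "is_graph n (corona m Hh)" using corona_graph[of m Hh] G(4) mm nm m2 by simp
    have "card (corona m Hh) = m + 1" using img_card[OF \<pi>(1) cg] \<pi>(2) G(2) by simp
    hence "card Hh = 1" using corona_card[of m Hh] G(4) mm by simp
    then obtain e where "Hh = {e}" by (metis One_nat_def card_1_singleton_iff)
    moreover then obtain a b where ab: "e = {a,b}" "a < m" "b < m" "a \<noteq> b"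
      using G(4) mm unfolding is_graph_def by blast
    ultimately have Hh: "Hh = {{a,b}}" by simp
    have "P4M n (corona m Hh) (a + m) a b (b + m) (pc m)" using corona_P4M[OF ab(2-4)] Hh nm by simp
    then obtain \<rho> where \<rho>: "bij_betw \<rho> {..<n} {..<n}" "corona m Hh = img \<rho> P"
      using P4M_iso[OF ev] P_def by blast
    have "G = img (\<pi> \<circ> \<rho>) P" using \<pi>(2) \<rho>(2) img_comp by simp
    moreover have "bij_betw (\<pi> \<circ> \<rho>) {..<n} {..<n}" using bij_betw_trans[OF \<rho>(1) \<pi>(1)] .
    ultimately show "graph_iso n P G" unfolding graph_iso_def by blast
  next
    fix G assume "graph_iso n P G"
    then obtain \<pi> where \<pi>: "bij_betw \<pi> {..<n} {..<n}" "G = img \<pi> P"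
      unfolding graph_iso_def by blast
    have GG: "is_graph n G" using img_graph[OF \<pi>(1) PG] \<pi>(2) by simp
    have Gc: "card G = m + 1" using img_card[OF \<pi>(1) PG] \<pi>(2) Pc by simp
    have H1: "is_graph m {{0,1}}" unfolding is_graph_def
    proof -
      have "(0::nat) < m" "(1::nat) < m" "(0::nat) \<noteq> 1" using m2 by auto
      thus "{{0::nat,1}} \<subseteq> {{u, v} |u v. u < m \<and> v < m \<and> u \<noteq> v}" by blast
    qed
    have "P4M n (corona m {{0,1}}) (0 + m) 0 1 (1 + m) (pc m)"
      using corona_P4M[of 0 m 1] m2 nm by simp
    then obtain \<rho> where \<rho>: "bij_betw \<rho> {..<n} {..<n}" "corona m {{0,1}} = img \<rho> P"
      using P4M_iso[OF ev] P_def by blast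
    let ?\<rho>' = "inv_into {..<n} \<rho>"
    have bi: "bij_betw ?\<rho>' {..<n} {..<n}" using bij_betw_inv_into[OF \<rho>(1)] .
    have "img ?\<rho>' (corona m {{0,1}}) = P" using \<rho>(2) img_inv[OF \<rho>(1) PG] by simp
    hence "G = img (\<pi> \<circ> ?\<rho>') (corona m {{0,1}})" using \<pi>(2) img_comp by metis
    moreover have "bij_betw (\<pi> \<circ> ?\<rho>') {..<n} {..<n}" using bij_betw_trans[OF bi \<pi>(1)] .
    ultimately have "graph_iso n (corona m {{0,1}}) G" unfolding graph_iso_def by blast
    hence "pendant n G" unfolding pendant_def using GG H1 nm by blast
    thus "pendant n G \<and> card G = m + 1" using Gc by simp
  qed
  show ?thesis using part1 part2 part3 unfolding C2_def P_def m_def by simp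
qed


end
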